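(* Let $N\ge3$ and let $l_0$ be the trajectory of system (S2) on the unstable manifold of $Q_1=(0,0,0)$ contained in the plane $\{z=0\}$ with $x>0$ (leaving $Q_1$ tangent to $(N,-1,0)$). Writing $(X,Y,Z)=(1/x,\,y/x,\,z/x)$ along it, and with $p_F(\sigma)=m+\frac{\sigma+2}{N}$: (a) If $m<p<p_F(\sigma)$, then along $l_0$, $Y\to-\infty$ and $X/Y\to0$ (and $Z\equiv0$), i.e. $l_0$ connects to the critical point at infinity $Q_5$. (b) If $p=p_F(\sigma)$, then $l_0$ is exactly the half-line $\{y=-x/N,\ z=0,\ x>0\}$ and it connects to $P_2$, i.e. $(X,Y,Z)\to\left(0,-\frac{p-m}{\sigma+2},0\right)$. (c) If $p>p_F(\sigma)$, then $l_0$ connects to $P_1$, i.e. $(X,Y,Z)\to(0,0,0)$.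
   Context: Let $m>1$, $\sigma>0$, $p>m$. System (S2) is $$\dot x=x(2-(m-1)y),\quad \dot y=-x-(N-2)y+z-my^2-\tfrac{p-m}{\sigma+2}xy,\quad \dot z=z(\sigma+2+(p-m)y),$$ and under $X=1/x$, $Y=y/x$, $Z=z/x$ (with a time change) it is equivalent to system (S1): $$\dot X=X[(m-1)Y-2X],\quad \dot Y=-Y^2-\tfrac{p-m}{\sigma+2}Y-X-NXY+XZ,\quad \dot Z=Z[(p-1)Y+\sigma X].$$ Limits are taken as the trajectory's parameter tends to $+\infty$. *)

theory Defs
  imports "HOL-Analysis.Analysis" "HOL-Library.Extended_Real"
begin

definition S2_solution ::
  "real \<Rightarrow> nat \<Rightarrow> real \<Rightarrow> real \<Rightarrow> (real \<Rightarrow> real) \<Rightarrow> (real \<Rightarrow> real) \<Rightarrow> (real \<Rightarrow> real)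
     \<Rightarrow> real set \<Rightarrow> bool" where
  "S2_solution m N \<sigma> p x y z D \<longleftrightarrow>
     (\<forall>t\<in>D.
        (x has_real_derivative (x t * (2 - (m - 1) * y t))) (at t) \<and>
        (y has_real_derivative
            (- x t - (real N - 2) * y t + z t - m * (y t)\<^sup>2
             - (p - m) / (\<sigma> + 2) * x t * y t)) (at t) \<and>
        (z has_real_derivative (z t * (\<sigma> + 2 + (p - m) * y t))) (at t))"

definition right_end :: "ereal \<Rightarrow> real filter" where
  "right_end T = (if T = \<infinity> then at_top else at_left (real_of_ereal T))"

definition S2_maximal_solution ::
  "real \<Rightarrow> nat \<Rightarrow> real \<Rightarrow> real \<Rightarrow> (real \<Rightarrow> real) \<Rightarrow> (real \<Rightarrow> real) \<Rightarrow> (real \<Rightarrow> real)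
     \<Rightarrow> ereal \<Rightarrow> bool" where
  "S2_maximal_solution m N \<sigma> p x y z T \<longleftrightarrow>
     S2_solution m N \<sigma> p x y z {t. ereal t < T} \<and>
     \<not> (\<exists>T' x' y' z'. T < T' \<and> S2_solution m N \<sigma> p x' y' z' {t. ereal t < T'} \<and>
          (\<forall>t. ereal t < T \<longrightarrow> x' t = x t \<and> y' t = y t \<and> z' t = z t))"

end

theory Submission
  imports Defs
begin


lemma ereal_lt_mono: "a \<le> b \<Longrightarrow> ereal b < T \<Longrightarrow> ereal a < T"
  by (metis ereal_less_eq(3) le_less_trans)

lemma nonincr_interior:
  fixes f f' :: "real \<Rightarrow> real"
  assumes ab: "a \<le> b" and cont: "continuous_on {a..b} f"
    and der: "\<And>t. a < t \<Longrightarrow> t < b \<Longrightarrow> (f has_real_derivative f' t) (at t)"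
    and neg: "\<And>t. a < t \<Longrightarrow> t < b \<Longrightarrow> f' t \<le> 0"
  shows "f b \<le> f a"
proof (cases "a < b")
  case True
  have "\<And>t. a < t \<Longrightarrow> t < b \<Longrightarrow> f differentiable (at t)"
    using der real_differentiable_def by blast
  from MVT[OF True cont this] obtain l z where z: "a < z" "z < b" "DERIV f z :> l" "f b - f a = (b - a) * l"
    by blast
  have "l = f' z" using DERIV_unique[OF z(3) der[OF z(1,2)]] .
  then have "l \<le> 0" using neg z by simp
  then have "(b - a) * l \<le> 0" using ab by (simp add: mult_nonneg_nonpos)
  then show ?thesis using z(4) by simp
qed (use ab in simp)

lemma nondecr_interior:
  fixes f f' :: "real \<Rightarrow> real"
  assumes ab: "a \<le> b" and cont: "continuous_on {a..b} f"
    and der: "\<And>t. a < t \<Longrightarrow> t < b \<Longrightarrow> (f has_real_derivative f' t) (at t)"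
    and pos: "\<And>t. a < t \<Longrightarrow> t < b \<Longrightarrow> f' t \<ge> 0"
  shows "f a \<le> f b"
proof -
  have "(\<lambda>t. - f t) b \<le> (\<lambda>t. - f t) a"
    by (rule nonincr_interior[where f'="\<lambda>t. - f' t"])
       (use ab cont der pos in \<open>auto intro!: continuous_intros derivative_eq_intros\<close>)
  then show ?thesis by simp
qed

lemma gronwall_zero:
  fixes d d' :: "real \<Rightarrow> real"
  assumes ab: "a \<le> b" and cont: "continuous_on {a..b} d"
    and der: "\<And>t. a < t \<Longrightarrow> t < b \<Longrightarrow> (d has_real_derivative d' t) (at t)"
    and le: "\<And>t. a < t \<Longrightarrow> t < b \<Longrightarrow> d' t \<le> K * d t"
    and d0: "d a = 0" and nn: "\<And>t. a \<le> t \<Longrightarrow> t \<le> b \<Longrightarrow> d t \<ge> 0"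
  shows "d b = 0"
proof -
  define e where "e t = d t * exp (- K * t)" for t
  have "e b \<le> e a"
  proof (rule nonincr_interior[where f=e and f'="\<lambda>t. d' t * exp (- K * t) - K * (d t * exp (- K * t))"])
    show "continuous_on {a..b} e" unfolding e_def by (intro continuous_intros cont)
    fix t assume t: "a < t" "t < b"
    show "(e has_real_derivative d' t * exp (- K * t) - K * (d t * exp (- K * t))) (at t)"
      using der[OF t] unfolding e_def by (auto intro!: derivative_eq_intros simp: algebra_simps)
    have "d' t * exp (- K * t) \<le> K * d t * exp (- K * t)"
      using le[OF t] by (simp add: mult_right_mono)
    then show "d' t * exp (- K * t) - K * (d t * exp (- K * t)) \<le> 0" by (simp add: algebra_simps)
  qed (use ab in simp)
  then have "d b * exp (- K * b) \<le> 0" using d0 by (simp add: e_def)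
  then have "d b \<le> 0" by (simp add: mult_le_0_iff)
  with nn[of b] ab show ?thesis by simp
qed

lemma barrier_fwd:
  fixes f f' :: "real \<Rightarrow> real" and T :: ereal
  assumes der: "\<And>t. ereal t < T \<Longrightarrow> (f has_real_derivative f' t) (at t)"
    and t0: "ereal t0 < T" "f t0 > 0"
    and zero: "\<And>t. t0 \<le> t \<Longrightarrow> ereal t < T \<Longrightarrow> f t = 0 \<Longrightarrow> f' t > 0"
    and s: "t0 \<le> s" "ereal s < T"
  shows "f s > 0"
proof (rule ccontr)
  assume "\<not> f s > 0"
  then have fs: "f s \<le> 0" by simp
  have sub: "{t0..s} \<subseteq> {t. ereal t < T}" using s by (auto intro: ereal_lt_mono)
  have cont: "continuous_on {t0..s} f"
    using der sub by (intro continuous_at_imp_continuous_on) (auto intro: DERIV_isCont)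
  define Z where "Z = {t\<in>{t0..s}. f t = 0}"
  have "\<exists>t. t0 \<le> t \<and> t \<le> s \<and> f t = 0"
    using IVT2'[of f s 0 t0] fs t0 s cont by auto
  then have Zne: "Z \<noteq> {}" by (auto simp: Z_def)
  have Zcl: "closed Z" unfolding Z_def
    by (rule continuous_closed_preimage_constant[OF cont]) simp
  have Zbdd: "bdd_below Z" by (auto simp: Z_def bdd_below_def)
  define r where "r = Inf Z"
  have rZ: "r \<in> Z" using closed_contains_Inf[OF Zne Zbdd Zcl] by (simp add: r_def)
  then have r: "t0 \<le> r" "r \<le> s" "f r = 0" by (auto simp: Z_def)
  have rt0: "t0 < r" using r t0 by (cases "t0 = r") auto
  have rmin: "r \<le> t" if "t \<in> Z" for t using that Zbdd unfolding r_def by (rule cInf_lower)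
  have pos: "f t > 0" if "t0 \<le> t" "t < r" for t
  proof (rule ccontr)
    assume "\<not> f t > 0"
    then have "\<exists>u. t0 \<le> u \<and> u \<le> t \<and> f u = 0"
      using IVT2'[of f t 0 t0] t0 that continuous_on_subset[OF cont, of "{t0..t}"] r by auto
    then obtain u where "t0 \<le> u" "u \<le> t" "f u = 0" by blast
    then have "u \<in> Z" using that r by (auto simp: Z_def)
    then show False using rmin[of u] \<open>u \<le> t\<close> that by simp
  qed
  have rT: "ereal r < T" using r s by (meson ereal_less_eq(3) le_less_trans)
  have "f' r > 0" using zero[OF r(1) rT r(3)] .
  from DERIV_pos_inc_left[OF der[OF rT] this] obtain d where d: "d > 0" "\<And>h. h > 0 \<Longrightarrow> h < d \<Longrightarrow> f (r - h) < f r"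
    by blast
  define h where "h = min d (r - t0) / 2"
  have h: "h > 0" "h < d" "h < r - t0" using d rt0 by (auto simp: h_def)
  have "f (r - h) < 0" using d(2)[OF h(1,2)] r by simp
  moreover have "f (r - h) > 0" using pos[of "r - h"] h by simp
  ultimately show False by simp
qed

lemma barrier_pos:
  fixes f f' :: "real \<Rightarrow> real" and T :: ereal
  assumes der: "\<And>t. ereal t < T \<Longrightarrow> (f has_real_derivative f' t) (at t)"
    and lim: "(f \<longlongrightarrow> 0) at_bot"
    and near: "\<And>t. t \<le> t0 \<Longrightarrow> ereal t < T \<Longrightarrow> f t \<le> 0 \<Longrightarrow> f' t > 0"
    and zero: "\<And>t. ereal t < T \<Longrightarrow> f t = 0 \<Longrightarrow> f' t > 0"
    and s: "ereal s < T"
  shows "f s > 0"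
proof -
  have A: "f u > 0" if u: "u \<le> t0" "ereal u < T" for u
  proof (rule ccontr)
    assume "\<not> f u > 0"
    then have fu: "f u \<le> 0" by simp
    obtain s1 where s1: "s1 \<le> u" "f s1 < 0"
    proof (cases "f u < 0")
      case True then show ?thesis using that[of u] by simp
    next
      case False
      then have "f u = 0" using fu by simp
      then have "f' u > 0" using near u by simp
      from DERIV_pos_inc_left[OF der[OF u(2)] this] obtain d where
        d: "d > 0" "\<And>h. h > 0 \<Longrightarrow> h < d \<Longrightarrow> f (u - h) < f u" by blast
      show ?thesis using that[of "u - d/2"] d \<open>f u = 0\<close> by simp
    qed
    have s1T: "ereal s1 < T" using s1 u by (auto intro: ereal_lt_mono)
    have "eventually (\<lambda>t. dist (f t) 0 < - f s1) at_bot"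
      using lim s1 by (auto simp: tendsto_iff)
    then obtain t1' where t1': "\<And>t. t \<le> t1' \<Longrightarrow> \<bar>f t\<bar> < - f s1"
      by (auto simp: eventually_at_bot_linorder)
    define t1 where "t1 = min t1' (s1 - 1)"
    have t1: "t1 < s1" "\<bar>f t1\<bar> < - f s1" using t1' by (auto simp: t1_def)
    have sub: "{t1..s1} \<subseteq> {t. ereal t < T}" using s1T by (auto intro: ereal_lt_mono)
    have cont: "continuous_on {t1..s1} f"
      using der sub by (intro continuous_at_imp_continuous_on) (auto intro: DERIV_isCont)
    obtain r where r: "r \<in> {t1..s1}" "\<And>t. t \<in> {t1..s1} \<Longrightarrow> f r \<le> f t"
      using continuous_attains_inf[OF compact_Icc _ cont] t1 by auto
    have fr: "f r < 0" using r(2)[of s1] t1 s1 by simp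
    have frs1: "f r \<le> f s1" using r(2)[of s1] t1 by simp
    have "r \<noteq> t1"
    proof
      assume "r = t1"
      then have "f t1 \<le> f s1" using frs1 by simp
      with t1(2) show False by simp
    qed
    then have rt1: "t1 < r" using r by auto
    have rT: "ereal r < T" using r sub by auto
    have "f' r > 0" using near[of r] r rT fr s1 u by simp
    from DERIV_pos_inc_left[OF der[OF rT] this] obtain d where
      d: "d > 0" "\<And>h. h > 0 \<Longrightarrow> h < d \<Longrightarrow> f (r - h) < f r" by blast
    define h where "h = min d (r - t1) / 2"
    have h: "h > 0" "h < d" "h < r - t1" using d rt1 by (auto simp: h_def)
    have "f (r - h) < f r" using d(2) h by simp
    moreover have "f r \<le> f (r - h)" using r h by auto
    ultimately show False by simp
  qed
  show ?thesis
  proof (cases "s \<le> t0")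
    case True then show ?thesis using A s by simp
  next
    case False
    have t0T: "ereal t0 < T" using s False ereal_lt_mono[of t0 s T] by simp
    show ?thesis
      by (rule barrier_fwd[OF der t0T A[OF order_refl t0T] zero]) (use False s in auto)
  qed
qed



lemma int_norm_bound:
  fixes f :: "real \<Rightarrow> 'b::banach"
  assumes "continuous_on {a..b} f" "a \<le> b" "\<And>s. s \<in> {a..b} \<Longrightarrow> norm (f s) \<le> B" "0 \<le> B"
  shows "norm (integral {a..b} f) \<le> B * (b - a)"
proof -
  have "(f has_integral integral {a..b} f) (cbox a b)"
    using integrable_continuous_interval[OF assms(1)] by (simp add: has_integral_integral)
  from has_integral_bound[OF assms(4) this] assms(2,3) show ?thesis by simp
qed

lemma local_existence:
  fixes G :: "real \<times> real \<Rightarrow> real \<times> real" and u0 :: "real \<times> real"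
  assumes Lip: "\<And>u v. norm (G u - G v) \<le> L * norm (u - v)" and L: "L \<ge> 0"
    and Mb: "\<And>u. norm (G u) \<le> M"
    and h: "0 < h" "L * h \<le> 1/2"
  shows "\<exists>g. continuous_on {t0..t0+h} g \<and> g t0 = u0 \<and>
     (\<forall>t. t0 < t \<longrightarrow> t < t0+h \<longrightarrow> (g has_vector_derivative G (g t)) (at t)) \<and>
     (\<forall>t. t0 \<le> t \<longrightarrow> t \<le> t0+h \<longrightarrow> norm (g t - u0) \<le> M * h)"
proof -
  have M: "M \<ge> 0" using Mb[of 0] norm_ge_zero order_trans by blast
  have "L-lipschitz_on UNIV G" by (rule lipschitz_onI) (auto simp: dist_norm intro: Lip L)
  then have contG: "continuous_on UNIV G" by (rule lipschitz_on_continuous_on)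
  define cl where "cl t = max t0 (min (t0+h) t)" for t
  have cl: "cl t \<in> {t0..t0+h}" for t using h by (auto simp: cl_def)
  have contcl: "continuous_on UNIV cl" unfolding cl_def by (intro continuous_intros)
  define P where "P f t = u0 + integral {t0..cl t} (\<lambda>s. G (f s))" for f :: "real \<Rightarrow> real \<times> real" and t
  have contGf: "continuous_on S (\<lambda>s. G (f s))" if "continuous_on UNIV f" for f :: "real \<Rightarrow> real \<times> real" and S
    using continuous_on_compose2[OF contG continuous_on_subset[OF that]] by auto
  have Pb: "P f \<in> bcontfun" if f: "continuous_on UNIV f" for f
  proof (rule bcontfun_normI)
    have "continuous_on {t0..t0+h} (\<lambda>t. integral {t0..t} (\<lambda>s. G (f s)))"
      by (rule indefinite_integral_continuous_1[OF integrable_continuous_interval[OF contGf[OF f]]])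
    then have "continuous_on UNIV (\<lambda>t. integral {t0..cl t} (\<lambda>s. G (f s)))"
      using continuous_on_compose2[OF _ contcl, of "{t0..t0+h}"] cl by blast
    then show "continuous_on UNIV (P f)" unfolding P_def by (intro continuous_intros)
    fix t
    have "norm (integral {t0..cl t} (\<lambda>s. G (f s))) \<le> M * (cl t - t0)"
      by (rule int_norm_bound[OF contGf[OF f]]) (use cl Mb M in auto)
    also have "\<dots> \<le> M * h" using cl[of t] M by (auto intro: mult_left_mono)
    finally show "norm (P f t) \<le> norm u0 + M * h" unfolding P_def
      by (meson add_mono norm_triangle_le order_refl)
  qed
  define \<Phi> where "\<Phi> f = Bcontfun (P (apply_bcontfun f))" for f :: "real \<Rightarrow>\<^sub>C (real \<times> real)"
  have \<Phi>a: "apply_bcontfun (\<Phi> f) = P (apply_bcontfun f)" for f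
    unfolding \<Phi>_def by (rule Bcontfun_inverse[OF Pb]) simp
  have contr: "dist (\<Phi> f) (\<Phi> g) \<le> 1/2 * dist f g" for f g
  proof (rule dist_bound)
    fix t
    have cf: "continuous_on {t0..cl t} (\<lambda>s. G (apply_bcontfun f s))" by (rule contGf) simp
    have cg: "continuous_on {t0..cl t} (\<lambda>s. G (apply_bcontfun g s))" by (rule contGf) simp
    have "dist (P f t) (P g t) = norm (integral {t0..cl t} (\<lambda>s. G (f s)) - integral {t0..cl t} (\<lambda>s. G (g s)))"
      by (simp add: P_def dist_norm)
    also have "\<dots> = norm (integral {t0..cl t} (\<lambda>s. G (f s) - G (g s)))"
      by (simp add: integral_diff integrable_continuous_interval[OF cf] integrable_continuous_interval[OF cg])
    also have "\<dots> \<le> (L * dist f g) * (cl t - t0)"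
    proof (rule int_norm_bound)
      show "continuous_on {t0..cl t} (\<lambda>s. G (apply_bcontfun f s) - G (apply_bcontfun g s))"
        by (intro continuous_intros cf cg)
      fix s
      have "norm (G (f s) - G (g s)) \<le> L * norm (f s - g s)" by (rule Lip)
      also have "\<dots> \<le> L * dist f g" using dist_bounded[of f s g] L by (simp add: dist_norm mult_left_mono)
      finally show "norm (G (f s) - G (g s)) \<le> L * dist f g" .
    qed (use cl L in auto)
    also have "\<dots> \<le> (L * dist f g) * h" using cl[of t] L by (auto intro!: mult_left_mono)
    also have "\<dots> = (L * h) * dist f g" by simp
    also have "\<dots> \<le> 1/2 * dist f g" using h by (intro mult_right_mono) auto
    finally show "dist (\<Phi> f t) (\<Phi> g t) \<le> 1/2 * dist f g" by (simp add: \<Phi>a)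
  qed
  obtain f0 where f0: "\<Phi> f0 = f0" using banach_fix_type[of "1/2" \<Phi>] contr by auto
  define g where "g = apply_bcontfun f0"
  have gP: "g t = P g t" for t using f0 \<Phi>a[of f0] by (metis g_def)
  have gint: "g t = u0 + integral {t0..t} (\<lambda>s. G (g s))" if "t0 \<le> t" "t \<le> t0 + h" for t
    using gP[of t] that by (simp add: P_def cl_def)
  have contg: "continuous_on UNIV g" by (simp add: g_def)
  show ?thesis
  proof (intro exI conjI allI impI)
    show "continuous_on {t0..t0+h} g" using contg by (rule continuous_on_subset) simp
    show "g t0 = u0" using gint[of t0] h by simp
    fix t
    assume t: "t0 < t" "t < t0 + h"
    have I: "((\<lambda>u. integral {t0..u} (\<lambda>s. G (g s))) has_vector_derivative G (g t)) (at t within {t0..t0+h})"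
      by (rule integral_has_vector_derivative) (use contGf[OF contg] t in auto)
    have "((\<lambda>t. u0 + integral {t0..t} (\<lambda>s. G (g s))) has_vector_derivative 0 + G (g t)) (at t within {t0..t0+h})"
      by (rule has_vector_derivative_add[OF has_vector_derivative_const I])
    then have "((\<lambda>t. u0 + integral {t0..t} (\<lambda>s. G (g s))) has_vector_derivative G (g t)) (at t within {t0..t0+h})"
      by simp
    then have "((\<lambda>t. u0 + integral {t0..t} (\<lambda>s. G (g s))) has_vector_derivative G (g t)) (at t within {t0<..<t0+h})"
      by (rule has_vector_derivative_within_subset) auto
    then have "((\<lambda>t. u0 + integral {t0..t} (\<lambda>s. G (g s))) has_vector_derivative G (g t)) (at t)"
      using at_within_open[of t "{t0<..<t0+h}"] t by simp
    then show "(g has_vector_derivative G (g t)) (at t)"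
      by (rule has_vector_derivative_transform_within_open[of _ _ _ "{t0<..<t0+h}"]) (use t gint in auto)
  next
    fix t assume t: "t0 \<le> t" "t \<le> t0 + h"
    have "norm (g t - u0) = norm (integral {t0..t} (\<lambda>s. G (g s)))" using gint[OF t] by simp
    also have "\<dots> \<le> M * (t - t0)" by (rule int_norm_bound[OF contGf[OF contg]]) (use t Mb M in auto)
    also have "\<dots> \<le> M * h" using t M by (auto intro: mult_left_mono)
    finally show "norm (g t - u0) \<le> M * h" .
  qed
qed



lemma vd_fst:
  assumes "(g has_vector_derivative v) (at t)"
  shows "((\<lambda>s. fst (g s)) has_real_derivative fst v) (at t)"
proof -
  have "((\<lambda>s. fst (g s)) has_derivative (\<lambda>h. fst (h *\<^sub>R v))) (at t)"
    using has_derivative_fst[OF assms[unfolded has_vector_derivative_def]] .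
  moreover have "(\<lambda>h. fst (h *\<^sub>R v)) = (*) (fst v)" by (auto simp: mult.commute)
  ultimately show ?thesis unfolding has_field_derivative_def by simp
qed

lemma vd_snd:
  assumes "(g has_vector_derivative v) (at t)"
  shows "((\<lambda>s. snd (g s)) has_real_derivative snd v) (at t)"
proof -
  have "((\<lambda>s. snd (g s)) has_derivative (\<lambda>h. snd (h *\<^sub>R v))) (at t)"
    using has_derivative_snd[OF assms[unfolded has_vector_derivative_def]] .
  moreover have "(\<lambda>h. snd (h *\<^sub>R v)) = (*) (snd v)" by (auto simp: mult.commute)
  ultimately show ?thesis unfolding has_field_derivative_def by simp
qed

definition VF :: "real \<Rightarrow> real \<Rightarrow> real \<Rightarrow> real \<Rightarrow> real \<times> real \<Rightarrow> real \<times> real" where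
  "VF a c m k u = (fst u * (2 - a * snd u), - fst u - c * snd u - m * (snd u)\<^sup>2 - k * fst u * snd u)"

definition clp :: "real \<Rightarrow> real \<Rightarrow> real" where "clp R v = max (- R) (min R v)"
definition clipP :: "real \<Rightarrow> real \<times> real \<Rightarrow> real \<times> real" where
  "clipP R u = (clp R (fst u), clp R (snd u))"

lemma prod_diff_bound:
  fixes x1 y1 x2 y2 R :: real
  assumes "\<bar>x1\<bar> \<le> R" "\<bar>y2\<bar> \<le> R"
  shows "\<bar>x1 * y1 - x2 * y2\<bar> \<le> R * (\<bar>x1 - x2\<bar> + \<bar>y1 - y2\<bar>)"
proof -
  have "x1 * y1 - x2 * y2 = x1 * (y1 - y2) + y2 * (x1 - x2)" by (simp add: algebra_simps)
  then have "\<bar>x1 * y1 - x2 * y2\<bar> \<le> \<bar>x1\<bar> * \<bar>y1 - y2\<bar> + \<bar>y2\<bar> * \<bar>x1 - x2\<bar>"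
    by (metis abs_mult abs_triangle_ineq)
  also have "\<dots> \<le> R * \<bar>y1 - y2\<bar> + R * \<bar>x1 - x2\<bar>"
    using assms by (intro add_mono mult_right_mono) auto
  finally show ?thesis by (simp add: algebra_simps)
qed

lemma abs4: fixes p q r s :: real shows "\<bar>- p - q - r - s\<bar> \<le> \<bar>p\<bar> + \<bar>q\<bar> + \<bar>r\<bar> + \<bar>s\<bar>"
  by (smt (verit))

lemma abs2m: fixes p q :: real shows "\<bar>p - q\<bar> \<le> \<bar>p\<bar> + \<bar>q\<bar>"
  by (smt (verit))

lemma VF_lip_box:
  fixes R :: real
  assumes R: "R \<ge> 0" and b: "\<bar>fst u\<bar> \<le> R" "\<bar>snd u\<bar> \<le> R" "\<bar>fst v\<bar> \<le> R" "\<bar>snd v\<bar> \<le> R"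
  shows "norm (VF a c m k u - VF a c m k v)
    \<le> 2 * (3 + \<bar>a\<bar> * R + \<bar>c\<bar> + 2 * \<bar>m\<bar> * R + \<bar>k\<bar> * R) * norm (u - v)"
proof -
  obtain x1 y1 where u: "u = (x1, y1)" by (cases u)
  obtain x2 y2 where v: "v = (x2, y2)" by (cases v)
  define dx where "dx = \<bar>x1 - x2\<bar>"
  define dy where "dy = \<bar>y1 - y2\<bar>"
  have dx0: "dx \<ge> 0" and dy0: "dy \<ge> 0" by (auto simp: dx_def dy_def)
  have P: "\<bar>x1 * y1 - x2 * y2\<bar> \<le> R * (dx + dy)"
    using prod_diff_bound[of x1 R y2 y1 x2] b by (simp add: u v dx_def dy_def)
  have D1: "\<bar>x1 * (2 - a * y1) - x2 * (2 - a * y2)\<bar> \<le> (2 + \<bar>a\<bar> * R) * (dx + dy)"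
  proof -
    have "x1 * (2 - a * y1) - x2 * (2 - a * y2) = 2 * (x1 - x2) - a * (x1 * y1 - x2 * y2)"
      by (simp add: algebra_simps)
    then have "\<bar>x1 * (2 - a * y1) - x2 * (2 - a * y2)\<bar> \<le> \<bar>2 * (x1 - x2)\<bar> + \<bar>a * (x1 * y1 - x2 * y2)\<bar>"
      using abs2m by simp
    also have "\<dots> = 2 * dx + \<bar>a\<bar> * \<bar>x1 * y1 - x2 * y2\<bar>" by (simp only: abs_mult dx_def abs_numeral)
    also have "\<dots> \<le> 2 * dx + \<bar>a\<bar> * (R * (dx + dy))" using P by (intro add_left_mono mult_left_mono) auto
    also have "\<dots> = (2 + \<bar>a\<bar> * R) * (dx + dy) - 2 * dy" by (simp add: algebra_simps)
    also have "\<dots> \<le> (2 + \<bar>a\<bar> * R) * (dx + dy)" using dy0 by simp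
    finally show ?thesis .
  qed
  have D2: "\<bar>(- x1 - c * y1 - m * y1\<^sup>2 - k * x1 * y1) - (- x2 - c * y2 - m * y2\<^sup>2 - k * x2 * y2)\<bar>
      \<le> (1 + \<bar>c\<bar> + 2 * \<bar>m\<bar> * R + \<bar>k\<bar> * R) * (dx + dy)"
  proof -
    have e: "(- x1 - c * y1 - m * y1\<^sup>2 - k * x1 * y1) - (- x2 - c * y2 - m * y2\<^sup>2 - k * x2 * y2)
       = - (x1 - x2) - c * (y1 - y2) - m * ((y1 + y2) * (y1 - y2)) - k * (x1 * y1 - x2 * y2)"
      by (simp add: algebra_simps power2_eq_square)
    have yy: "\<bar>(y1 + y2) * (y1 - y2)\<bar> \<le> 2 * R * dy"
    proof -
      have "\<bar>y1 + y2\<bar> \<le> 2 * R" using b u v by simp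
      then show ?thesis unfolding dy_def abs_mult by (intro mult_right_mono) auto
    qed
    have "\<bar>- (x1 - x2) - c * (y1 - y2) - m * ((y1 + y2) * (y1 - y2)) - k * (x1 * y1 - x2 * y2)\<bar>
        \<le> \<bar>x1 - x2\<bar> + \<bar>c * (y1 - y2)\<bar> + \<bar>m * ((y1 + y2) * (y1 - y2))\<bar> + \<bar>k * (x1 * y1 - x2 * y2)\<bar>"
      by (rule abs4)
    also have "\<dots> = dx + \<bar>c\<bar> * dy + \<bar>m\<bar> * \<bar>(y1 + y2) * (y1 - y2)\<bar> + \<bar>k\<bar> * \<bar>x1 * y1 - x2 * y2\<bar>"
      by (simp only: abs_mult dx_def dy_def)
    also have "\<dots> \<le> dx + \<bar>c\<bar> * dy + \<bar>m\<bar> * (2 * R * dy) + \<bar>k\<bar> * (R * (dx + dy))"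
      using yy P by (intro add_mono mult_left_mono order_refl) auto
    also have "\<dots> = (1 + \<bar>c\<bar> + 2 * \<bar>m\<bar> * R + \<bar>k\<bar> * R) * (dx + dy) - (dy + \<bar>c\<bar> * dx + 2 * \<bar>m\<bar> * R * dx)"
      by (simp add: algebra_simps)
    also have "\<dots> \<le> (1 + \<bar>c\<bar> + 2 * \<bar>m\<bar> * R + \<bar>k\<bar> * R) * (dx + dy)"
    proof -
      have "0 \<le> \<bar>c\<bar> * dx" "0 \<le> 2 * \<bar>m\<bar> * R * dx" using dx0 R by auto
      then show ?thesis using dy0 by linarith
    qed
    finally show ?thesis using e by simp
  qed
  have nd: "dx + dy \<le> 2 * norm (u - v)"
    using norm_fst_le[of "x1 - x2" "y1 - y2"] norm_snd_le[of "y1 - y2" "x1 - x2"]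
    by (simp add: u v dx_def dy_def)
  have "norm (VF a c m k u - VF a c m k v)
      \<le> \<bar>x1 * (2 - a * y1) - x2 * (2 - a * y2)\<bar>
        + \<bar>(- x1 - c * y1 - m * y1\<^sup>2 - k * x1 * y1) - (- x2 - c * y2 - m * y2\<^sup>2 - k * x2 * y2)\<bar>"
    using norm_Pair_le[of "x1 * (2 - a * y1) - x2 * (2 - a * y2)"
        "(- x1 - c * y1 - m * y1\<^sup>2 - k * x1 * y1) - (- x2 - c * y2 - m * y2\<^sup>2 - k * x2 * y2)"]
    by (simp add: VF_def u v)
  also have "\<dots> \<le> (2 + \<bar>a\<bar> * R) * (dx + dy) + (1 + \<bar>c\<bar> + 2 * \<bar>m\<bar> * R + \<bar>k\<bar> * R) * (dx + dy)"
    using D1 D2 by (rule add_mono)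
  also have "\<dots> = (3 + \<bar>a\<bar> * R + \<bar>c\<bar> + 2 * \<bar>m\<bar> * R + \<bar>k\<bar> * R) * (dx + dy)"
    by (simp add: algebra_simps)
  also have "\<dots> \<le> (3 + \<bar>a\<bar> * R + \<bar>c\<bar> + 2 * \<bar>m\<bar> * R + \<bar>k\<bar> * R) * (2 * norm (u - v))"
    using nd R by (intro mult_left_mono) auto
  also have "\<dots> = 2 * (3 + \<bar>a\<bar> * R + \<bar>c\<bar> + 2 * \<bar>m\<bar> * R + \<bar>k\<bar> * R) * norm (u - v)" by simp
  finally show ?thesis .
qed

lemma VF_bound_box:
  fixes R :: real
  assumes R: "R \<ge> 0" and b: "\<bar>fst u\<bar> \<le> R" "\<bar>snd u\<bar> \<le> R"
  shows "norm (VF a c m k u) \<le> R * (2 + \<bar>a\<bar> * R) + (R + \<bar>c\<bar> * R + \<bar>m\<bar> * R\<^sup>2 + \<bar>k\<bar> * R\<^sup>2)"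
proof -
  obtain x y where u: "u = (x, y)" by (cases u)
  have hx: "\<bar>x\<bar> \<le> R" and hy: "\<bar>y\<bar> \<le> R" using b u by auto
  have xy: "\<bar>x * y\<bar> \<le> R * R" unfolding abs_mult using hx hy by (intro mult_mono) auto
  have yy: "\<bar>y\<^sup>2\<bar> \<le> R\<^sup>2"
  proof -
    have "\<bar>y\<bar>\<^sup>2 \<le> R\<^sup>2" using hy by (intro power_mono) auto
    then show ?thesis by simp
  qed
  have "\<bar>x * (2 - a * y)\<bar> \<le> R * (2 + \<bar>a\<bar> * R)"
  proof -
    have "\<bar>2 - a * y\<bar> \<le> 2 + \<bar>a\<bar> * R"
      using abs2m[of 2 "a * y"] abs_mult[of a y] mult_left_mono[OF hy, of "\<bar>a\<bar>"] by simp
    then show ?thesis unfolding abs_mult using hx by (intro mult_mono) auto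
  qed
  moreover have "\<bar>- x - c * y - m * y\<^sup>2 - k * x * y\<bar> \<le> R + \<bar>c\<bar> * R + \<bar>m\<bar> * R\<^sup>2 + \<bar>k\<bar> * R\<^sup>2"
  proof -
    have "\<bar>- x - c * y - m * y\<^sup>2 - k * x * y\<bar> \<le> \<bar>x\<bar> + \<bar>c\<bar> * \<bar>y\<bar> + \<bar>m\<bar> * \<bar>y\<^sup>2\<bar> + \<bar>k\<bar> * \<bar>x * y\<bar>"
      unfolding abs_mult[symmetric] mult.assoc by (rule abs4)
    also have "\<dots> \<le> R + \<bar>c\<bar> * R + \<bar>m\<bar> * R\<^sup>2 + \<bar>k\<bar> * (R * R)"
      using hx hy yy xy by (intro add_mono mult_left_mono) auto
    finally show ?thesis by (simp add: power2_eq_square)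
  qed
  ultimately show ?thesis using norm_Pair_le[of "x * (2 - a * y)" "- x - c * y - m * y\<^sup>2 - k * x * y"]
    by (simp add: VF_def u)
qed

lemma clp_bound: "R \<ge> 0 \<Longrightarrow> \<bar>clp R v\<bar> \<le> R" by (auto simp: clp_def)
lemma clp_lip: "\<bar>clp R v - clp R w\<bar> \<le> \<bar>v - w\<bar>" by (auto simp: clp_def)
lemma clp_id: "\<bar>v\<bar> \<le> R \<Longrightarrow> clp R v = v" by (auto simp: clp_def)

lemma clipP_lip: "norm (clipP R u - clipP R v) \<le> norm (u - v)"
proof -
  have a: "(clp R (fst u) - clp R (fst v))\<^sup>2 \<le> (fst u - fst v)\<^sup>2"
    using clp_lip by (simp add: abs_le_square_iff)
  have b: "(clp R (snd u) - clp R (snd v))\<^sup>2 \<le> (snd u - snd v)\<^sup>2"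
    using clp_lip by (simp add: abs_le_square_iff)
  have "sqrt ((clp R (fst u) - clp R (fst v))\<^sup>2 + (clp R (snd u) - clp R (snd v))\<^sup>2)
     \<le> sqrt ((fst u - fst v)\<^sup>2 + (snd u - snd v)\<^sup>2)"
    using a b by (intro real_sqrt_le_mono) simp
  moreover have "u - v = (fst u - fst v, snd u - snd v)" by (simp add: prod_eq_iff)
  ultimately show ?thesis unfolding clipP_def by (simp add: norm_Pair)
qed

lemma clipP_id: "\<bar>fst u\<bar> \<le> R \<Longrightarrow> \<bar>snd u\<bar> \<le> R \<Longrightarrow> clipP R u = u"
  by (cases u) (simp add: clipP_def clp_id)



lemma ext_contra:
  fixes m \<sigma> p T0 B :: real and N :: nat and x y z :: "real \<Rightarrow> real"
  assumes sol: "S2_maximal_solution m N \<sigma> p x y z (ereal T0)"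
    and z0: "\<And>t. t < T0 \<Longrightarrow> z t = 0"
    and bx: "\<And>t. t < T0 \<Longrightarrow> \<bar>x t\<bar> \<le> B" and bY: "\<And>t. t < T0 \<Longrightarrow> \<bar>y t\<bar> \<le> B"
  shows False
proof -
  define a where "a = m - 1"
  define c where "c = real N - 2"
  define k where "k = (p - m) / (\<sigma> + 2)"
  have B0: "0 \<le> B" using bx[of "T0 - 1"] by simp
  define R where "R = B + 1"
  have R0: "R \<ge> 0" using B0 by (simp add: R_def)
  define F where "F = VF a c m k"
  define G where "G u = F (clipP R u)" for u
  define LL where "LL = 2 * (3 + \<bar>a\<bar> * R + \<bar>c\<bar> + 2 * \<bar>m\<bar> * R + \<bar>k\<bar> * R)"
  define MM where "MM = R * (2 + \<bar>a\<bar> * R) + (R + \<bar>c\<bar> * R + \<bar>m\<bar> * R\<^sup>2 + \<bar>k\<bar> * R\<^sup>2)"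
  have LL0: "LL \<ge> 0" using R0 by (simp add: LL_def)
  have clipbox: "\<bar>fst (clipP R u)\<bar> \<le> R" "\<bar>snd (clipP R u)\<bar> \<le> R" for u
    using clp_bound[OF R0] by (auto simp: clipP_def)
  have Lip: "norm (G u - G v) \<le> LL * norm (u - v)" for u v
  proof -
    have "norm (G u - G v) \<le> LL * norm (clipP R u - clipP R v)"
      unfolding G_def F_def LL_def by (rule VF_lip_box[OF R0 clipbox clipbox])
    also have "\<dots> \<le> LL * norm (u - v)" using clipP_lip LL0 by (rule mult_left_mono)
    finally show ?thesis .
  qed
  have Mb: "norm (G u) \<le> MM" for u unfolding G_def F_def MM_def by (rule VF_bound_box[OF R0 clipbox])
  have MM0: "MM \<ge> 0" using Mb[of 0] norm_ge_zero order_trans by blast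
  define h where "h = min 1 (min (1 / (2 * LL + 1)) (1 / (MM + 1)))"
  have h0: "0 < h" using LL0 MM0 by (simp add: h_def)
  have hL: "LL * h \<le> 1/2"
  proof -
    have "h \<le> 1/(2*LL+1)" by (simp add: h_def)
    then have "LL * h \<le> LL * (1/(2*LL+1))" using LL0 by (rule mult_left_mono)
    also have "\<dots> \<le> 1/2" using LL0 by (simp add: field_simps)
    finally show ?thesis .
  qed
  have hM: "MM * h \<le> 1"
  proof -
    have "h \<le> 1/(MM+1)" by (simp add: h_def)
    then have "MM * h \<le> MM * (1/(MM+1))" using MM0 by (rule mult_left_mono)
    also have "\<dots> \<le> 1" using MM0 by (simp add: field_simps)
    finally show ?thesis .
  qed
  define t0 where "t0 = T0 - h/2"
  have t0T: "t0 < T0" "T0 < t0 + h" using h0 by (auto simp: t0_def)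
  define u0 where "u0 = (x t0, y t0)"
  obtain g where gc: "continuous_on {t0..t0+h} g" and g0: "g t0 = u0"
    and gd: "\<And>t. t0 < t \<Longrightarrow> t < t0+h \<Longrightarrow> (g has_vector_derivative G (g t)) (at t)"
    and gb: "\<And>t. t0 \<le> t \<Longrightarrow> t \<le> t0+h \<Longrightarrow> norm (g t - u0) \<le> MM * h"
    using local_existence[OF Lip LL0 Mb h0 hL, of t0 u0] by blast
  have gbox: "\<bar>fst (g t)\<bar> \<le> R \<and> \<bar>snd (g t)\<bar> \<le> R" if "t0 \<le> t" "t \<le> t0+h" for t
  proof -
    have n: "norm (g t - u0) \<le> 1" using gb[OF that] hM by simp
    have e: "g t - u0 = (fst (g t) - x t0, snd (g t) - y t0)" by (simp add: u0_def prod_eq_iff)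
    have "\<bar>fst (g t) - x t0\<bar> \<le> 1" using norm_fst_le[of "fst (g t) - x t0" "snd (g t) - y t0"] n e by simp
    moreover have "\<bar>snd (g t) - y t0\<bar> \<le> 1" using norm_snd_le[of "snd (g t) - y t0" "fst (g t) - x t0"] n e by simp
    moreover have "\<bar>x t0\<bar> \<le> B" "\<bar>y t0\<bar> \<le> B" using bx bY t0T by auto
    ultimately show ?thesis by (simp add: R_def abs_le_iff)
  qed
  have GF: "G u = F u" if "\<bar>fst u\<bar> \<le> R" "\<bar>snd u\<bar> \<le> R" for u using clipP_id[OF that] by (simp add: G_def)
  have S: "S2_solution m N \<sigma> p x y z {t. ereal t < ereal T0}" using sol by (simp add: S2_maximal_solution_def)
  have dx: "(x has_real_derivative x t * (2 - a * y t)) (at t)" if "t < T0" for t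
    using S that by (simp add: S2_solution_def a_def)
  have dy: "(y has_real_derivative (- x t - c * y t - m * (y t)\<^sup>2 - k * x t * y t)) (at t)" if "t < T0" for t
  proof -
    have "(y has_real_derivative (- x t - (real N - 2) * y t + z t - m * (y t)\<^sup>2
             - (p - m) / (\<sigma> + 2) * x t * y t)) (at t)"
      using S that unfolding S2_solution_def by auto
    then show ?thesis using z0[OF that] by (simp add: c_def k_def)
  qed
  have ubox: "\<bar>x t\<bar> \<le> R" "\<bar>y t\<bar> \<le> R" if "t < T0" for t using bx[OF that] bY[OF that] by (auto simp: R_def)
  have uniq: "g s = (x s, y s)" if s: "t0 \<le> s" "s < T0" for s
  proof -
    define d where "d r = (fst (g r) - x r)\<^sup>2 + (snd (g r) - y r)\<^sup>2" for r
    define d' where "d' r = 2 * (fst (g r) - x r) * (fst (G (g r)) - x r * (2 - a * y r))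
       + 2 * (snd (g r) - y r) * (snd (G (g r)) - (- x r - c * y r - m * (y r)\<^sup>2 - k * x r * y r))" for r
    have "d s = 0"
    proof (rule gronwall_zero[where d=d and d'=d' and K="2*LL" and a=t0 and b=s])
      show "t0 \<le> s" using s by simp
      have cg: "continuous_on {t0..s} g" using s t0T by (intro continuous_on_subset[OF gc]) auto
      have cx: "continuous_on {t0..s} x" using s
        by (intro continuous_at_imp_continuous_on ballI) (auto intro!: DERIV_isCont[OF dx])
      have cy: "continuous_on {t0..s} y" using s
        by (intro continuous_at_imp_continuous_on ballI) (auto intro!: DERIV_isCont[OF dy])
      show "continuous_on {t0..s} d" unfolding d_def
        by (intro continuous_intros cx cy continuous_on_fst[OF cg] continuous_on_snd[OF cg])
      show "d t0 = 0" using g0 by (simp add: d_def u0_def)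
    next
      fix r assume r: "t0 < r" "r < s"
      have rT: "r < T0" using r s by simp
      have D1: "((\<lambda>r. fst (g r)) has_real_derivative fst (G (g r))) (at r)"
        by (rule vd_fst[OF gd]) (use r s t0T in auto)
      have D2: "((\<lambda>r. snd (g r)) has_real_derivative snd (G (g r))) (at r)"
        by (rule vd_snd[OF gd]) (use r s t0T in auto)
      show "(d has_real_derivative d' r) (at r)" unfolding d_def
        using D1 D2 dx[OF rT] dy[OF rT]
        by (auto intro!: derivative_eq_intros simp: d'_def algebra_simps)
      have Fu: "(x r * (2 - a * y r), - x r - c * y r - m * (y r)\<^sup>2 - k * x r * y r) = G (x r, y r)"
        using GF[of "(x r, y r)"] ubox[OF rT] by (simp add: F_def VF_def)
      have "d' r = 2 * inner (g r - (x r, y r)) (G (g r) - G (x r, y r))"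
        unfolding d'_def Fu[symmetric] by (cases "g r"; cases "G (g r)") (simp add: algebra_simps)
      also have "\<dots> \<le> 2 * (norm (g r - (x r, y r)) * norm (G (g r) - G (x r, y r)))"
        using norm_cauchy_schwarz by simp
      also have "\<dots> \<le> 2 * (norm (g r - (x r, y r)) * (LL * norm (g r - (x r, y r))))"
        using Lip by (intro mult_left_mono) auto
      also have "\<dots> = 2 * LL * (norm (g r - (x r, y r)))\<^sup>2" by (simp add: power2_eq_square)
      also have "(norm (g r - (x r, y r)))\<^sup>2 = d r"
        by (cases "g r") (simp add: d_def norm_Pair)
      finally show "d' r \<le> 2 * LL * d r" .
    next
      fix r show "d r \<ge> 0" by (simp add: d_def)
    qed
    then show ?thesis by (simp add: d_def prod_eq_iff)
  qed
  define X where "X t = (if t < T0 then x t else fst (g t))" for t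
  define Y where "Y t = (if t < T0 then y t else snd (g t))" for t
  have XYg: "X r = fst (g r) \<and> Y r = snd (g r)" if "t0 \<le> r" "r \<le> t0 + h" for r
    using uniq[of r] that by (cases "r < T0") (auto simp: X_def Y_def)
  have dX: "(X has_real_derivative X t * (2 - (m - 1) * Y t)) (at t)"
    and dY: "(Y has_real_derivative (- X t - (real N - 2) * Y t - m * (Y t)\<^sup>2 - (p - m) / (\<sigma> + 2) * X t * Y t)) (at t)"
    if t: "t < t0 + h" for t
  proof -
    have "(X has_real_derivative X t * (2 - (m - 1) * Y t)) (at t) \<and>
      (Y has_real_derivative (- X t - (real N - 2) * Y t - m * (Y t)\<^sup>2 - (p - m) / (\<sigma> + 2) * X t * Y t)) (at t)"
    proof (cases "t < T0")
      case True
      have e1: "X t * (2 - (m - 1) * Y t) = x t * (2 - a * y t)" using True by (simp add: X_def Y_def a_def)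
      have e2: "- X t - (real N - 2) * Y t - m * (Y t)\<^sup>2 - (p - m) / (\<sigma> + 2) * X t * Y t
          = - x t - c * y t - m * (y t)\<^sup>2 - k * x t * y t" using True by (simp add: X_def Y_def c_def k_def)
      have "(X has_real_derivative x t * (2 - a * y t)) (at t)"
        by (rule has_field_derivative_transform_within_open[OF dx[OF True], of "{..<T0}"]) (use True in \<open>auto simp: X_def\<close>)
      moreover have "(Y has_real_derivative (- x t - c * y t - m * (y t)\<^sup>2 - k * x t * y t)) (at t)"
        by (rule has_field_derivative_transform_within_open[OF dy[OF True], of "{..<T0}"]) (use True in \<open>auto simp: Y_def\<close>)
      ultimately show ?thesis using e1 e2 by simp
    next
      case False
      then have tt: "t0 < t" "t < t0 + h" using t t0T by auto
      have gt: "G (g t) = F (g t)" using GF gbox[of t] tt by simp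
      have e1: "X t * (2 - (m - 1) * Y t) = fst (G (g t))" using XYg[of t] tt gt by (simp add: F_def VF_def a_def)
      have e2: "- X t - (real N - 2) * Y t - m * (Y t)\<^sup>2 - (p - m) / (\<sigma> + 2) * X t * Y t = snd (G (g t))"
        using XYg[of t] tt gt by (simp add: F_def VF_def c_def k_def)
      have "(X has_real_derivative fst (G (g t))) (at t)"
        by (rule has_field_derivative_transform_within_open[OF vd_fst[OF gd[OF tt]], of "{t0<..<t0+h}"])
           (use tt XYg in auto)
      moreover have "(Y has_real_derivative snd (G (g t))) (at t)"
        by (rule has_field_derivative_transform_within_open[OF vd_snd[OF gd[OF tt]], of "{t0<..<t0+h}"])
           (use tt XYg in auto)
      ultimately show ?thesis using e1 e2 by simp
    qed
    then show "(X has_real_derivative X t * (2 - (m - 1) * Y t)) (at t)"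
      "(Y has_real_derivative (- X t - (real N - 2) * Y t - m * (Y t)\<^sup>2 - (p - m) / (\<sigma> + 2) * X t * Y t)) (at t)"
      by auto
  qed
  have ext: "S2_solution m N \<sigma> p X Y (\<lambda>_. 0) {t. ereal t < ereal (t0 + h)}"
    unfolding S2_solution_def using dX dY by simp
  have agree: "\<forall>t. ereal t < ereal T0 \<longrightarrow> X t = x t \<and> Y t = y t \<and> (\<lambda>_. 0::real) t = z t"
    using z0 by (auto simp: X_def Y_def)
  have "ereal T0 < ereal (t0 + h)" using t0T by simp
  then show False using sol ext agree unfolding S2_maximal_solution_def by blast
qed



lemma w_ident:
  fixes n X Y m k :: real
  assumes "n \<noteq> 0"
  shows "(- X - (n-2)*Y - m*Y\<^sup>2 - k*X*Y) + X*(2 - (m-1)*Y)/n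
    = (Y + X/n) * (-(n-2) - m*(Y + X/n) + (m/n - (k - 1/n))*X) + (k - 1/n)*X\<^sup>2/n"
  using assms by (simp add: field_simps power2_eq_square)

lemma b_ident:
  fixes n X Y m k :: real
  assumes "X \<noteq> 0"
  shows "- (((- X - (n-2)*Y - m*Y\<^sup>2 - k*X*Y) * X - Y * (X*(2 - (m-1)*Y))) / X\<^sup>2)
    = 1 - n * (- Y / X) + X * (- Y / X) * ((- Y / X) - k)"
  using assms by (simp add: field_simps power2_eq_square)

locale traj =
  fixes m \<sigma> p :: real and N :: nat and x y z :: "real \<Rightarrow> real" and T :: ereal
  assumes hm: "m > 1" and h\<sigma>: "\<sigma> > 0" and hp: "p > m" and hN: "N \<ge> 3"
    and sol: "S2_maximal_solution m N \<sigma> p x y z T"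
    and pos: "\<forall>t. ereal t < T \<longrightarrow> x t > 0 \<and> z t = 0"
    and from_Q1: "((\<lambda>t. (x t, y t, z t)) \<longlongrightarrow> (0, 0, 0)) at_bot"
begin

abbreviation "a \<equiv> m - 1"
abbreviation "c \<equiv> real N - 2"
abbreviation "k \<equiv> (p - m) / (\<sigma> + 2)"
abbreviation "n \<equiv> real N"

lemma a_pos: "a > 0" using hm by simp
lemma c_ge: "c \<ge> 1" using hN by simp
lemma n_ge: "n \<ge> 3" using hN by simp
lemma k_pos: "k > 0" using hp h\<sigma> by simp

lemma xpos: "ereal t < T \<Longrightarrow> x t > 0" using pos by blast
lemma zz: "ereal t < T \<Longrightarrow> z t = 0" using pos by blast

lemma T_not_bot: "\<exists>t. ereal t < T"
proof (rule ccontr)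
  assume "\<not> (\<exists>t. ereal t < T)"
  then have none: "\<And>t. \<not> ereal t < T" by blast
  have "S2_solution m N \<sigma> p (\<lambda>_. 0) (\<lambda>_. 0) (\<lambda>_. 0) {t. ereal t < \<infinity>}"
    unfolding S2_solution_def by simp
  moreover have "T < \<infinity>" using none[of 0] by (cases T) auto
  ultimately show False using sol none unfolding S2_maximal_solution_def by blast
qed

lemma S: "S2_solution m N \<sigma> p x y z {t. ereal t < T}"
  using sol by (simp add: S2_maximal_solution_def)

lemma dx: "ereal t < T \<Longrightarrow> (x has_real_derivative x t * (2 - a * y t)) (at t)"
  using S by (simp add: S2_solution_def)

lemma dy: "ereal t < T \<Longrightarrow> (y has_real_derivative (- x t - c * y t - m * (y t)\<^sup>2 - k * x t * y t)) (at t)"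
proof -
  assume t: "ereal t < T"
  have "(y has_real_derivative (- x t - (real N - 2) * y t + z t - m * (y t)\<^sup>2
             - (p - m) / (\<sigma> + 2) * x t * y t)) (at t)"
    using S t unfolding S2_solution_def by auto
  then show ?thesis using zz[OF t] by simp
qed

lemma contx: "ereal t < T \<Longrightarrow> isCont x t" using dx DERIV_isCont by blast
lemma conty: "ereal t < T \<Longrightarrow> isCont y t" using dy DERIV_isCont by blast

lemma cont_on: "ereal b < T \<Longrightarrow> continuous_on {a0..b} x \<and> continuous_on {a0..b} y"
  by (auto intro!: continuous_at_imp_continuous_on contx conty intro: ereal_lt_mono)

lemma limx: "(x \<longlongrightarrow> 0) at_bot"
  using tendsto_fst[OF from_Q1] by simp
lemma limy: "(y \<longlongrightarrow> 0) at_bot"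
  using tendsto_fst[OF tendsto_snd[OF from_Q1]] by simp

lemma yneg: "ereal t < T \<Longrightarrow> y t < 0"
proof -
  assume t: "ereal t < T"
  define f' where "f' s = - (- x s - c * y s - m * (y s)\<^sup>2 - k * x s * y s)" for s
  have D: "((\<lambda>t. - y t) has_real_derivative f' s) (at s)" if "ereal s < T" for s
    unfolding f'_def using dy[OF that] by (rule DERIV_minus)
  have L: "((\<lambda>t. - y t) \<longlongrightarrow> 0) at_bot" using tendsto_minus[OF limy] by simp
  have key: "f' s > 0" if "ereal s < T" "y s \<ge> 0" for s
  proof -
    have "x s > 0" using xpos that by simp
    moreover have "c * y s \<ge> 0" "m * (y s)\<^sup>2 \<ge> 0"
      using that c_ge hm by auto
    moreover have "k * x s * y s \<ge> 0"
      using mult_nonneg_nonneg[OF mult_nonneg_nonneg[OF less_imp_le[OF k_pos] less_imp_le[OF xpos[OF that(1)]]] that(2)] .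
    ultimately show ?thesis unfolding f'_def by linarith
  qed
  have near: "\<And>s. s \<le> 0 \<Longrightarrow> ereal s < T \<Longrightarrow> - y s \<le> 0 \<Longrightarrow> f' s > 0" using key by simp
  have zero: "\<And>s. ereal s < T \<Longrightarrow> - y s = 0 \<Longrightarrow> f' s > 0" using key by simp
  have "0 < - y t" using barrier_pos[OF D L near zero t] by simp
  then show ?thesis by simp
qed

lemma dx_ge: "ereal t < T \<Longrightarrow> x t * (2 - a * y t) \<ge> 2 * x t"
proof -
  assume t: "ereal t < T"
  have "a * y t \<le> 0" using a_pos yneg[OF t] by (simp add: mult_pos_neg less_imp_le)
  then show ?thesis using xpos[OF t] by (simp add: algebra_simps mult_left_mono_neg)
qed

lemma xmono: "s \<le> t \<Longrightarrow> ereal t < T \<Longrightarrow> x s \<le> x t"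
proof -
  assume st: "s \<le> t" and t: "ereal t < T"
  show "x s \<le> x t"
  proof (rule nondecr_interior[where f=x and a=s and b=t and f'="\<lambda>t. x t * (2 - a * y t)"])
    show "continuous_on {s..t} x" using cont_on[OF t] by simp
    fix r assume r: "s < r" "r < t"
    have rT: "ereal r < T" using ereal_lt_mono[of r t T] r t by simp
    show "(x has_real_derivative x r * (2 - a * y r)) (at r)" by (rule dx[OF rT])
    show "x r * (2 - a * y r) \<ge> 0" using dx_ge[OF rT] xpos[OF rT] by simp
  qed (use st in simp)
qed

lemma T_gt: "T \<noteq> - \<infinity>" using T_not_bot by auto

lemma F_nontriv: "right_end T \<noteq> bot"
  unfolding right_end_def by auto

lemma ev_after: "ereal t1 < T \<Longrightarrow> eventually (\<lambda>t. t1 < t \<and> ereal t < T) (right_end T)"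
proof (cases T)
  case (real T0)
  assume "ereal t1 < T"
  then have "t1 < T0" using real by simp
  then show ?thesis using eventually_at_left_real[of t1 T0] real
    by (auto simp: right_end_def elim!: eventually_mono)
next
  case PInf
  then show ?thesis by (simp add: right_end_def eventually_gt_at_top)
qed simp

lemma ev_inD: "eventually (\<lambda>t. ereal t < T) (right_end T)"
proof -
  obtain t1 where "ereal t1 < T" using T_not_bot by blast
  from ev_after[OF this] show ?thesis by (rule eventually_mono) simp
qed

lemma xgrow:
  assumes TI: "T = \<infinity>"
  shows "filterlim x at_top (right_end T)"
proof -
  define t1 :: real where "t1 = 0"
  have t1T: "ereal t1 < T" using TI by simp
  have x1: "x t1 > 0" using xpos[OF t1T] .
  have lin: "x t1 + 2 * x t1 * (t - t1) \<le> x t" if "t1 \<le> t" for t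
  proof -
    have tT: "ereal t < T" using TI by simp
    have "(\<lambda>s. x s - 2 * x t1 * s) t1 \<le> (\<lambda>s. x s - 2 * x t1 * s) t"
    proof (rule nondecr_interior[where f="\<lambda>s. x s - 2 * x t1 * s" and a=t1 and b=t and f'="\<lambda>s. x s * (2 - a * y s) - 2 * x t1"])
      show "continuous_on {t1..t} (\<lambda>s. x s - 2 * x t1 * s)"
        using cont_on[OF tT] by (intro continuous_intros) auto
      fix r assume r: "t1 < r" "r < t"
      have rT: "ereal r < T" using TI by simp
      show "((\<lambda>s. x s - 2 * x t1 * s) has_real_derivative x r * (2 - a * y r) - 2 * x t1) (at r)"
        using dx[OF rT] by (auto intro!: derivative_eq_intros)
      have "x t1 \<le> x r" using xmono[OF _ rT] r by simp
      then show "x r * (2 - a * y r) - 2 * x t1 \<ge> 0" using dx_ge[OF rT] by simp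
    qed (use that in simp)
    then show ?thesis by (simp add: algebra_simps)
  qed
  have "eventually (\<lambda>t. Z \<le> x t) at_top" for Z
  proof -
    have "eventually (\<lambda>t. t1 + \<bar>Z\<bar> / (2 * x t1) \<le> t) at_top" by (rule eventually_ge_at_top)
    then show ?thesis
    proof (rule eventually_mono)
      fix t assume t: "t1 + \<bar>Z\<bar> / (2 * x t1) \<le> t"
      then have tt: "t1 \<le> t" using x1 by (smt (verit) divide_nonneg_pos abs_ge_zero)
      have "\<bar>Z\<bar> \<le> 2 * x t1 * (t - t1)" using t x1 by (simp add: field_simps)
      then show "Z \<le> x t" using lin[OF tt] x1 by linarith
    qed
  qed
  then show ?thesis using TI by (simp add: right_end_def filterlim_at_top)
qed

lemma xlim_cases:
  "filterlim x at_top (right_end T) \<or> (\<exists>T0 B. T = ereal T0 \<and> (\<forall>t. t < T0 \<longrightarrow> x t \<le> B))"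
proof (cases T)
  case PInf then show ?thesis using xgrow by simp
next
  case MInf then show ?thesis using T_gt by simp
next
  case (real T0)
  show ?thesis
  proof (cases "\<exists>B. \<forall>t. t < T0 \<longrightarrow> x t \<le> B")
    case True then show ?thesis using real by blast
  next
    case False
    have "eventually (\<lambda>t. Z \<le> x t) (at_left T0)" for Z
    proof -
      obtain t1 where t1: "t1 < T0" "x t1 > Z" using False by (meson not_le)
      show ?thesis using eventually_at_left_real[OF t1(1)]
      proof (rule eventually_mono)
        fix t assume "t \<in> {t1<..<T0}"
        then have "x t1 \<le> x t" using xmono[of t1 t] real by simp
        then show "Z \<le> x t" using t1 by simp
      qed
    qed
    then show ?thesis using real by (simp add: right_end_def filterlim_at_top)
  qed
qed

lemma sol_real: "T = ereal T0 \<Longrightarrow> S2_maximal_solution m N \<sigma> p x y z (ereal T0)"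
  using sol by simp

lemma x_inf:
  assumes yb: "\<And>t. ereal t < T \<Longrightarrow> \<bar>y t\<bar> \<le> x t"
  shows "filterlim x at_top (right_end T)"
proof -
  { fix T0 B assume T0: "T = ereal T0" and B: "\<forall>t. t < T0 \<longrightarrow> x t \<le> B"
    have False
    proof (rule ext_contra[OF sol_real[OF T0]])
      fix t assume t: "t < T0"
      then have tT: "ereal t < T" using T0 by simp
      show "z t = 0" using zz[OF tT] .
      show "\<bar>x t\<bar> \<le> B" using B t xpos[OF tT] by simp
      show "\<bar>y t\<bar> \<le> B" using B t yb[OF tT] by force
    qed }
  then show ?thesis using xlim_cases by blast
qed

definition "w t = y t + x t / n"
definition "\<delta> = k - 1 / n"
definition "gg t = - c - m * w t + (m / n - \<delta>) * x t"

lemma dw: "ereal t < T \<Longrightarrow> (w has_real_derivative w t * gg t + \<delta> * (x t)\<^sup>2 / n) (at t)"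
proof -
  assume t: "ereal t < T"
  have "(w has_real_derivative (- x t - c * y t - m * (y t)\<^sup>2 - k * x t * y t) + x t * (2 - a * y t) / n) (at t)"
    unfolding w_def[abs_def] by (rule DERIV_add[OF dy[OF t] DERIV_cdivide[OF dx[OF t]]])
  moreover have "(- x t - c * y t - m * (y t)\<^sup>2 - k * x t * y t) + x t * (2 - a * y t) / n
       = w t * gg t + \<delta> * (x t)\<^sup>2 / n"
    unfolding w_def gg_def \<delta>_def by (rule w_ident) (use n_ge in simp)
  ultimately show ?thesis by simp
qed

lemma limw: "(w \<longlongrightarrow> 0) at_bot"
  unfolding w_def[abs_def] using tendsto_add[OF limy tendsto_divide[OF limx tendsto_const]] n_ge by simp

lemma gg_near: "\<exists>tz. \<forall>t\<le>tz. gg t < 0"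
proof -
  have "(gg \<longlongrightarrow> - c - m * 0 + (m / n - \<delta>) * 0) at_bot"
    unfolding gg_def[abs_def] by (intro tendsto_intros limw limx)
  then have "eventually (\<lambda>t. gg t < 0) at_bot" using c_ge by (intro order_tendstoD(2)) auto
  then show ?thesis by (simp add: eventually_at_bot_linorder)
qed

lemma gg_near': obtains tz where "\<And>t. t \<le> tz \<Longrightarrow> gg t < 0" using gg_near by blast

lemma w_pos: assumes d: "\<delta> > 0" and t: "ereal t < T" shows "w t > 0"
proof -
  obtain tz where t0': "\<forall>s\<le>tz. gg s < 0" using gg_near by blast
  note t0 = t0'[rule_format]
  define f' where "f' s = w s * gg s + \<delta> * (x s)\<^sup>2 / n" for s
  have D: "(w has_real_derivative f' s) (at s)" if "ereal s < T" for s
    unfolding f'_def by (rule dw[OF that])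
  have pp: "\<delta> * (x s)\<^sup>2 / n > 0" if "ereal s < T" for s
  proof -
    have "0 < (x s)\<^sup>2" using xpos[OF that] by simp
    moreover have "0 < n" using n_ge by simp
    ultimately show ?thesis using d by simp
  qed
  have near: "f' s > 0" if "s \<le> tz" "ereal s < T" "w s \<le> 0" for s
  proof -
    have "w s * gg s \<ge> 0" using t0[OF that(1)] that(3) by (simp add: mult_nonpos_nonpos)
    then show ?thesis using pp[OF that(2)] by (simp add: f'_def)
  qed
  have zero: "f' s > 0" if "ereal s < T" "w s = 0" for s
    using pp[OF that(1)] that by (simp add: f'_def)
  show ?thesis using barrier_pos[of T w f' tz t, OF D limw near zero t] .
qed

lemma w_neg: assumes d: "\<delta> < 0" and t: "ereal t < T" shows "w t < 0"
proof -
  obtain tz where t0': "\<forall>s\<le>tz. gg s < 0" using gg_near by blast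
  note t0 = t0'[rule_format]
  define f' where "f' s = - (w s * gg s + \<delta> * (x s)\<^sup>2 / n)" for s
  have D: "((\<lambda>t. - w t) has_real_derivative f' s) (at s)" if "ereal s < T" for s
    unfolding f'_def using dw[OF that] by (rule DERIV_minus)
  have pp: "- (\<delta> * (x s)\<^sup>2 / n) > 0" if "ereal s < T" for s
  proof -
    have "0 < (x s)\<^sup>2" using xpos[OF that] by simp
    moreover have "0 < n" using n_ge by simp
    moreover have "0 < - \<delta>" using d by simp
    ultimately have "(- \<delta>) * (x s)\<^sup>2 / n > 0" by (intro divide_pos_pos mult_pos_pos)
    moreover have "(- \<delta>) * (x s)\<^sup>2 / n = - (\<delta> * (x s)\<^sup>2 / n)" by simp
    ultimately show ?thesis by simp
  qed
  have L: "((\<lambda>t. - w t) \<longlongrightarrow> 0) at_bot" using tendsto_minus[OF limw] by simp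
  have near: "f' s > 0" if "s \<le> tz" "ereal s < T" "- w s \<le> 0" for s
  proof -
    have "w s * gg s \<le> 0" using t0[OF that(1)] that(3) by (simp add: mult_nonneg_nonpos)
    then show ?thesis using pp[OF that(2)] by (simp add: f'_def)
  qed
  have zero: "f' s > 0" if "ereal s < T" "- w s = 0" for s
    using pp[OF that(1)] that by (simp add: f'_def)
  have "0 < - w t" using barrier_pos[of T "\<lambda>t. - w t" f' tz t, OF D L near zero t] by simp
  then show ?thesis by simp
qed

end



context traj begin

lemma contw: "ereal t < T \<Longrightarrow> isCont w t"
  using dw DERIV_isCont by blast

lemma contgg: "ereal t < T \<Longrightarrow> isCont gg t"
  unfolding gg_def[abs_def] using contw contx by (intro continuous_intros) auto

lemma w_zero: assumes d: "\<delta> = 0" and t: "ereal t < T" shows "w t = 0"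
proof -
  obtain tz where t0': "\<forall>s\<le>tz. gg s < 0" using gg_near by blast
  note t0 = t0'[rule_format]
  define h where "h s = w s * w s" for s
  define h' where "h' s = (w s * gg s) * w s + (w s * gg s) * w s" for s
  have dw0: "(w has_real_derivative w s * gg s) (at s)" if "ereal s < T" for s
    using dw[OF that] d by simp
  have hd: "(h has_real_derivative h' s) (at s)" if "ereal s < T" for s
    unfolding h_def[abs_def] h'_def using DERIV_mult[OF dw0[OF that] dw0[OF that]] by simp
  have hc: "continuous_on {u..v} h" if "ereal v < T" for u v
    using hd that by (intro continuous_at_imp_continuous_on ballI)
      (auto intro!: DERIV_isCont[OF hd] intro: ereal_lt_mono)
  have h'eq: "h' s = 2 * gg s * h s" for s by (simp add: h'_def h_def)
  have hnn: "h s \<ge> 0" for s by (simp add: h_def)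
  have bk: "w s = 0" if sT: "s \<le> tz" "ereal s < T" for s
  proof (rule ccontr)
    assume "w s \<noteq> 0"
    then have hs: "h s > 0" by (simp add: h_def zero_less_mult_iff) (meson linorder_neqE_linordered_idom)
    have mono: "h s \<le> h u" if "u \<le> s" for u
    proof (rule nonincr_interior[where f=h and f'=h' and a=u and b=s])
      show "continuous_on {u..s} h" by (rule hc[OF sT(2)])
      fix r assume r: "u < r" "r < s"
      have rT: "ereal r < T" using ereal_lt_mono[of r s T] r sT by simp
      show "(h has_real_derivative h' r) (at r)" by (rule hd[OF rT])
      have "gg r < 0" using t0 r sT by simp
      then show "h' r \<le> 0" unfolding h'eq using hnn[of r] by (simp add: mult_nonpos_nonneg)
    qed (use that in simp)
    have "(h \<longlongrightarrow> 0 * 0) at_bot" unfolding h_def[abs_def] by (intro tendsto_mult limw)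
    then have "eventually (\<lambda>u. h u < h s) at_bot" using hs by (intro order_tendstoD(2)) auto
    then obtain u0 where u0: "\<forall>u\<le>u0. h u < h s" by (auto simp: eventually_at_bot_linorder)
    have "h (min u0 s) < h s" using u0 by simp
    moreover have "h s \<le> h (min u0 s)" by (rule mono) simp
    ultimately show False by simp
  qed
  show ?thesis
  proof (cases "t \<le> tz")
    case True then show ?thesis using bk t by simp
  next
    case False
    have tzT: "ereal tz < T" using ereal_lt_mono[of tz t T] False t by simp
    have cgg: "continuous_on {tz..t} gg"
      by (intro continuous_at_imp_continuous_on ballI contgg) (use t in \<open>auto intro: ereal_lt_mono\<close>)
    obtain r0 where r0: "r0 \<in> {tz..t}" "\<And>r. r \<in> {tz..t} \<Longrightarrow> gg r \<le> gg r0"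
      using continuous_attains_sup[OF compact_Icc _ cgg] False by auto
    have "h t = 0"
    proof (rule gronwall_zero[where d=h and d'=h' and a=tz and b=t and K="2 * gg r0"])
      show "continuous_on {tz..t} h" by (rule hc[OF t])
      show "h tz = 0" using bk[OF order_refl tzT] by (simp add: h_def)
      fix r assume r: "tz < r" "r < t"
      have rT: "ereal r < T" using ereal_lt_mono[of r t T] r t by simp
      show "(h has_real_derivative h' r) (at r)" by (rule hd[OF rT])
      have "gg r \<le> gg r0" using r0 r by simp
      then show "h' r \<le> 2 * gg r0 * h r" unfolding h'eq using hnn[of r]
        by (simp add: mult_right_mono)
    next
      fix r show "h r \<ge> 0" by (rule hnn)
    qed (use False in simp)
    then show ?thesis by (simp add: h_def)
  qed
qed

end



context traj begin

lemma delta_eq: "\<delta> = (p - (m + (\<sigma> + 2) / n)) / (\<sigma> + 2)"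
  using h\<sigma> n_ge unfolding \<delta>_def by (simp add: field_simps)

lemma delta_neg_iff: "\<delta> < 0 \<longleftrightarrow> p < m + (\<sigma> + 2) / n"
  unfolding delta_eq using h\<sigma> by (simp add: divide_less_0_iff)
lemma delta_pos_iff: "\<delta> > 0 \<longleftrightarrow> p > m + (\<sigma> + 2) / n"
  unfolding delta_eq using h\<sigma> by (simp add: zero_less_divide_iff)
lemma delta_zero_iff: "\<delta> = 0 \<longleftrightarrow> p = m + (\<sigma> + 2) / n"
  unfolding delta_eq using h\<sigma> by simp

lemma inv_x_lim: "filterlim x at_top (right_end T) \<Longrightarrow> ((\<lambda>t. 1 / x t) \<longlongrightarrow> 0) (right_end T)"
  using tendsto_inverse_0_at_top by (simp add: inverse_eq_divide)

lemma zx_lim: "((\<lambda>t. z t / x t) \<longlongrightarrow> 0) (right_end T)"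
  by (rule tendsto_eventually) (use ev_inD in \<open>auto elim!: eventually_mono simp: zz\<close>)

lemma case_b:
  assumes hpF: "p = m + (\<sigma> + 2) / n"
  shows "{(x t, y t, z t) | t. ereal t < T} = {(s, - s / n, 0) | s. s > 0} \<and>
        ((\<lambda>t. (1 / x t, y t / x t, z t / x t)) \<longlongrightarrow> (0, - (p - m) / (\<sigma> + 2), 0)) (right_end T)"
proof -
  have d: "\<delta> = 0" using delta_zero_iff hpF by simp
  have yx: "y t = - x t / n" if "ereal t < T" for t
    using w_zero[OF d that] by (simp add: w_def)
  have yb: "\<bar>y t\<bar> \<le> x t" if "ereal t < T" for t
  proof -
    have "\<bar>y t\<bar> = x t / n" using yx[OF that] xpos[OF that] n_ge by simp
    also have "\<dots> \<le> x t" using xpos[OF that] n_ge by (simp add: divide_le_eq)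
    finally show ?thesis .
  qed
  have xinf: "filterlim x at_top (right_end T)" by (rule x_inf[OF yb])
  have kk: "(p - m) / (\<sigma> + 2) = 1 / n" using hpF h\<sigma> n_ge by (simp add: field_simps)
  have set: "{(x t, y t, z t) | t. ereal t < T} = {(s, - s / n, 0) | s. s > 0}"
  proof (intro equalityI subsetI)
    fix q :: "real \<times> real \<times> real" assume "q \<in> {(x t, y t, z t) | t. ereal t < T}"
    then obtain t where t: "ereal t < T" "q = (x t, y t, z t)" by blast
    then show "q \<in> {(s, - s / n, 0) | s. s > 0}" using yx[OF t(1)] zz[OF t(1)] xpos[OF t(1)] by auto
  next
    fix q :: "real \<times> real \<times> real" assume "q \<in> {(s, - s / n, 0) | s. s > 0}"
    then obtain s where s: "s > 0" "q = (s, - s / n, 0)" by blast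
    have "eventually (\<lambda>t. s + 1 \<le> x t) (right_end T)" using xinf by (simp add: filterlim_at_top)
    then have "eventually (\<lambda>t. s + 1 \<le> x t \<and> ereal t < T) (right_end T)" using ev_inD
      by (rule eventually_conj)
    then obtain t2 where t2: "s + 1 \<le> x t2" "ereal t2 < T" using eventually_happens'[OF F_nontriv] by blast
    have "eventually (\<lambda>t. x t < s) at_bot" using limx s(1) by (intro order_tendstoD(2)) auto
    then obtain u0 where u0: "\<forall>u\<le>u0. x u < s" by (auto simp: eventually_at_bot_linorder)
    define t1 where "t1 = min u0 t2"
    have t1: "x t1 < s" "t1 \<le> t2" using u0 by (auto simp: t1_def)
    have "\<exists>t. t1 \<le> t \<and> t \<le> t2 \<and> x t = s"
      by (rule IVT') (use t1 t2 cont_on[OF t2(2)] in auto)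
    then obtain t where t: "t1 \<le> t" "t \<le> t2" "x t = s" by blast
    have tT: "ereal t < T" using ereal_lt_mono[OF t(2) t2(2)] .
    have "q = (x t, y t, z t)" using s t yx[OF tT] zz[OF tT] by simp
    then show "q \<in> {(x t, y t, z t) | t. ereal t < T}" using tT by blast
  qed
  have yxlim: "((\<lambda>t. y t / x t) \<longlongrightarrow> - (p - m) / (\<sigma> + 2)) (right_end T)"
  proof (rule tendsto_eventually)
    show "eventually (\<lambda>t. y t / x t = - (p - m) / (\<sigma> + 2)) (right_end T)"
      using ev_inD
    proof (rule eventually_mono)
      fix t assume t: "ereal t < T"
      have e: "- (p - m) / (\<sigma> + 2) = - ((p - m) / (\<sigma> + 2))" by (rule minus_divide_left[symmetric])
      show "y t / x t = - (p - m) / (\<sigma> + 2)" unfolding e kk using yx[OF t] xpos[OF t] by simp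
    qed
  qed
  show ?thesis using set tendsto_Pair[OF inv_x_lim[OF xinf] tendsto_Pair[OF yxlim zx_lim]] by simp
qed

end



lemma b_ident2:
  fixes n X Y m k :: real
  assumes "X \<noteq> 0"
  shows "((- (- X - (n-2)*Y - m*Y\<^sup>2 - k*X*Y)) * X - (- Y) * (X*(2 - (m-1)*Y))) / (X * X)
    = 1 - n * (- Y / X) + X * (- Y / X) * ((- Y / X) - k)"
  using assms by (simp add: field_simps power2_eq_square)

context traj begin

definition "bt t = - y t / x t"
definition "bd t = 1 - n * bt t + x t * bt t * (bt t - k)"

lemma dbt: "ereal t < T \<Longrightarrow> (bt has_real_derivative bd t) (at t)"
proof -
  assume t: "ereal t < T"
  have "((\<lambda>t. - y t / x t) has_real_derivative
      ((- (- x t - c * y t - m * (y t)\<^sup>2 - k * x t * y t)) * x t - (- y t) * (x t * (2 - a * y t))) / (x t * x t)) (at t)"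
    by (rule DERIV_divide[OF DERIV_minus[OF dy[OF t]] dx[OF t]]) (use xpos[OF t] in simp)
  moreover have "((- (- x t - c * y t - m * (y t)\<^sup>2 - k * x t * y t)) * x t - (- y t) * (x t * (2 - a * y t))) / (x t * x t)
      = bd t"
    unfolding bd_def bt_def by (rule b_ident2) (use xpos[OF t] in simp)
  ultimately show ?thesis unfolding bt_def[abs_def] by simp
qed

lemma dlnx: "ereal t < T \<Longrightarrow> ((\<lambda>t. ln (x t)) has_real_derivative 2 - a * y t) (at t)"
proof -
  assume t: "ereal t < T"
  have "((\<lambda>t. ln (x t)) has_real_derivative inverse (x t) * (x t * (2 - a * y t))) (at t)"
    by (rule DERIV_chain2[OF DERIV_ln dx[OF t]]) (rule xpos[OF t])
  moreover have "inverse (x t) * (x t * (2 - a * y t)) = 2 - a * y t" using xpos[OF t] by simp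
  ultimately show ?thesis by simp
qed

lemma bt_y: "ereal t < T \<Longrightarrow> y t = - bt t * x t"
  using xpos[of t] by (simp add: bt_def)

lemma bt_pos: "ereal t < T \<Longrightarrow> bt t > 0"
  using xpos[of t] yneg[of t] by (simp add: bt_def divide_neg_pos)

lemma contbt: "ereal t < T \<Longrightarrow> isCont bt t" using dbt DERIV_isCont by blast

end



context traj begin

lemma case_c:
  assumes hp2: "p > m + (\<sigma> + 2) / n"
  shows "((\<lambda>t. (1 / x t, y t / x t, z t / x t)) \<longlongrightarrow> (0, 0, 0)) (right_end T)"
proof -
  have d: "\<delta> > 0" using delta_pos_iff hp2 by simp
  have npos: "n > 0" using n_ge by simp
  have btb: "bt t < 1 / n" if t: "ereal t < T" for t
  proof -
    have "- y t < x t / n" using w_pos[OF d t] by (simp add: w_def)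
    then show ?thesis using xpos[OF t] npos by (simp add: bt_def divide_simps mult.commute)
  qed
  have yb: "\<bar>y t\<bar> \<le> x t" if t: "ereal t < T" for t
  proof -
    have "- y t < x t / n" using w_pos[OF d t] by (simp add: w_def)
    also have "\<dots> \<le> x t" using xpos[OF t] n_ge by (simp add: divide_le_eq)
    finally show ?thesis using yneg[OF t] by simp
  qed
  have xinf: "filterlim x at_top (right_end T)" by (rule x_inf[OF yb])
  have bd_up: "bd t \<le> 1 - \<delta> * x t * bt t" if t: "ereal t < T" for t
  proof -
    have "bt t - k \<le> - \<delta>" using btb[OF t] by (simp add: \<delta>_def)
    moreover have "x t * bt t > 0" using xpos[OF t] bt_pos[OF t] by simp
    ultimately have "x t * bt t * (bt t - k) \<le> x t * bt t * (- \<delta>)" by (intro mult_left_mono) auto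
    moreover have "n * bt t \<ge> 0" using npos bt_pos[OF t] by simp
    ultimately show ?thesis unfolding bd_def by (simp add: algebra_simps)
  qed
  have small: "eventually (\<lambda>t. bt t < \<epsilon>) (right_end T)" if e: "\<epsilon> > 0" for \<epsilon>
  proof -
    define X1 where "X1 = max 1 (2 / (\<delta> * \<epsilon>))"
    have X1: "X1 \<ge> 1" "\<delta> * \<epsilon> * X1 \<ge> 2"
    proof -
      show "X1 \<ge> 1" by (simp add: X1_def)
      have "2 / (\<delta> * \<epsilon>) \<le> X1" by (simp add: X1_def)
      then show "\<delta> * \<epsilon> * X1 \<ge> 2" using d e by (simp add: divide_le_eq mult.commute)
    qed
    have "eventually (\<lambda>t. X1 \<le> x t) (right_end T)" using xinf by (simp add: filterlim_at_top)
    then have "eventually (\<lambda>t. X1 \<le> x t \<and> ereal t < T) (right_end T)" using ev_inD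
      by (rule eventually_conj)
    then obtain t1 where t1: "X1 \<le> x t1" "ereal t1 < T" using eventually_happens'[OF F_nontriv] by blast
    have xge: "X1 \<le> x t" if "t1 \<le> t" "ereal t < T" for t using xmono[OF that] t1 by simp
    have claim1: "\<exists>t2. t1 \<le> t2 \<and> ereal t2 < T \<and> bt t2 < \<epsilon>"
    proof (rule ccontr)
      assume neg: "\<not> ?thesis"
      have ge: "bt t \<ge> \<epsilon>" if "t1 \<le> t" "ereal t < T" for t
      proof (rule ccontr)
        assume "\<not> \<epsilon> \<le> bt t"
        then have "bt t < \<epsilon>" by simp
        then show False using neg that by blast
      qed
      define C where "C = a / n + 2"
      have "a / n > 0" using a_pos npos by (rule divide_pos_pos)
      then have C: "C > 0" by (simp add: C_def)
      define \<eta> where "\<eta> = (\<delta> * \<epsilon> / 2) / C"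
      have \<eta>: "\<eta> > 0" using d e C by (simp add: \<eta>_def)
      have \<eta>C: "\<eta> * C = \<delta> * \<epsilon> / 2" using C by (simp add: \<eta>_def)
      define \<Phi> where "\<Phi> t = bt t + \<eta> * ln (x t)" for t
      define \<Phi>' where "\<Phi>' t = bd t + \<eta> * (2 - a * y t)" for t
      have d\<Phi>: "(\<Phi> has_real_derivative \<Phi>' t) (at t)" if "ereal t < T" for t
        unfolding \<Phi>_def[abs_def] \<Phi>'_def by (intro DERIV_add dbt DERIV_cmult dlnx that)
      have \<Phi>'neg: "\<Phi>' r \<le> 0" if r: "t1 \<le> r" "ereal r < T" for r
      proof -
        have X: "X1 \<le> x r" using xge[OF r] .
        have \<beta>: "\<epsilon> \<le> bt r" "bt r < 1 / n" using ge[OF r] btb[OF r(2)] by auto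
        have A: "bd r \<le> 1 - \<delta> * \<epsilon> * x r"
        proof -
          have "\<delta> * x r * \<epsilon> \<le> \<delta> * x r * bt r"
            using \<beta> d xpos[OF r(2)] by (intro mult_left_mono) auto
          then show ?thesis using bd_up[OF r(2)] by (simp add: algebra_simps)
        qed
        have B: "2 - a * y r \<le> C * x r"
        proof -
          have "- a * y r = a * bt r * x r" using bt_y[OF r(2)] by (simp add: algebra_simps)
          also have "\<dots> \<le> a * (1 / n) * x r"
            using \<beta> a_pos xpos[OF r(2)] by (intro mult_right_mono mult_left_mono) auto
          finally have hh: "- a * y r \<le> a * (1 / n) * x r" .
          have "2 - a * y r = 2 + (- a * y r)" by (simp add: algebra_simps)
          also have "\<dots> \<le> 2 + a * (1 / n) * x r" using hh by (rule add_left_mono)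
          also have "a * (1 / n) * x r = (a / n) * x r" by simp
          finally have "2 - a * y r \<le> 2 + (a / n) * x r" .
          also have "\<dots> \<le> 2 * x r + (a / n) * x r" using X X1 by simp
          finally show ?thesis by (simp add: C_def algebra_simps)
        qed
        have "\<eta> * (2 - a * y r) \<le> \<eta> * (C * x r)" using B \<eta> by (intro mult_left_mono) auto
        also have "\<dots> = \<delta> * \<epsilon> * x r / 2" using \<eta>C by (simp add: algebra_simps)
        finally have "\<Phi>' r \<le> 1 - \<delta> * \<epsilon> * x r / 2" using A by (simp add: \<Phi>'_def)
        moreover have "\<delta> * \<epsilon> * x r \<ge> 2"
        proof -
          have "\<delta> * \<epsilon> * X1 \<le> \<delta> * \<epsilon> * x r" using X d e by (intro mult_left_mono) auto
          then show ?thesis using X1 by simp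
        qed
        ultimately show ?thesis by simp
      qed
      have \<Phi>bound: "\<Phi> t \<le> \<Phi> t1" if t: "t1 \<le> t" "ereal t < T" for t
      proof (rule nonincr_interior[where f=\<Phi> and f'=\<Phi>' and a=t1 and b=t])
        show "continuous_on {t1..t} \<Phi>"
          by (intro continuous_at_imp_continuous_on ballI DERIV_isCont[OF d\<Phi>])
             (use t in \<open>auto intro: ereal_lt_mono\<close>)
        fix r assume r: "t1 < r" "r < t"
        have rT: "ereal r < T" using ereal_lt_mono[of r t T] r t by simp
        show "(\<Phi> has_real_derivative \<Phi>' r) (at r)" by (rule d\<Phi>[OF rT])
        show "\<Phi>' r \<le> 0" using \<Phi>'neg[OF _ rT] r by simp
      qed (use t in simp)
      define L where "L = exp (\<Phi> t1 / \<eta>)"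
      have "eventually (\<lambda>t. L + 1 \<le> x t) (right_end T)" using xinf by (simp add: filterlim_at_top)
      then have "eventually (\<lambda>t. L + 1 \<le> x t \<and> (t1 < t \<and> ereal t < T)) (right_end T)"
        using ev_after[OF t1(2)] by (rule eventually_conj)
      then obtain t where t: "L + 1 \<le> x t" "t1 < t" "ereal t < T"
        using eventually_happens'[OF F_nontriv] by blast
      have "\<Phi> t \<le> \<Phi> t1" using \<Phi>bound t by simp
      then have "\<eta> * ln (x t) \<le> \<Phi> t1" using bt_pos[OF t(3)] by (simp add: \<Phi>_def)
      then have "ln (x t) \<le> \<Phi> t1 / \<eta>" using \<eta> by (simp add: field_simps mult.commute)
      then have "exp (ln (x t)) \<le> L" unfolding L_def by simp
      then have "x t \<le> L" using xpos[OF t(3)] by simp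
      then show False using t by simp
    qed
    then obtain t2 where t2: "t1 \<le> t2" "ereal t2 < T" "bt t2 < \<epsilon>" by blast
    define f' where "f' t = - bd t" for t
    have D: "((\<lambda>t. \<epsilon> - bt t) has_real_derivative f' s) (at s)" if "ereal s < T" for s
      unfolding f'_def using DERIV_diff[OF DERIV_const dbt[OF that]] by simp
    have pos2: "\<epsilon> - bt t2 > 0" using t2 by simp
    have zero: "f' s > 0" if "t2 \<le> s" "ereal s < T" "\<epsilon> - bt s = 0" for s
    proof -
      have X: "X1 \<le> x s" using xge[of s] that t2 by simp
      have "\<delta> * \<epsilon> * X1 \<le> \<delta> * \<epsilon> * x s" using X d e by (intro mult_left_mono) auto
      then have "\<delta> * x s * bt s \<ge> 2" using X1 that by (simp add: mult.commute mult.left_commute)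
      then show ?thesis using bd_up[OF that(2)] by (simp add: f'_def)
    qed
    have "bt s < \<epsilon>" if "t2 \<le> s" "ereal s < T" for s
      using barrier_fwd[of T "\<lambda>t. \<epsilon> - bt t" f' t2 s, OF D t2(2) pos2 zero that] by simp
    then show ?thesis using ev_after[OF t2(2)] by (auto elim!: eventually_mono)
  qed
  have yxlim: "((\<lambda>t. y t / x t) \<longlongrightarrow> 0) (right_end T)"
  proof (rule tendstoI)
    fix \<epsilon> :: real assume e: "\<epsilon> > 0"
    show "eventually (\<lambda>t. dist (y t / x t) 0 < \<epsilon>) (right_end T)"
      using eventually_conj[OF small[OF e] ev_inD]
    proof (rule eventually_mono)
      fix t assume t: "bt t < \<epsilon> \<and> ereal t < T"
      then have "y t / x t = - bt t" by (simp add: bt_def)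
      then show "dist (y t / x t) 0 < \<epsilon>" using t bt_pos[of t] by simp
    qed
  qed
  show ?thesis using tendsto_Pair[OF inv_x_lim[OF xinf] tendsto_Pair[OF yxlim zx_lim]] by simp
qed

end



lemma aux_id: fixes n r k b :: real shows "n * r = 1 - k * n \<Longrightarrow> b - k - n * r * b = k * (n * b - 1)"
proof -
  assume h: "n * r = 1 - k * n"
  have "n * r * b = (1 - k * n) * b" using h by simp
  then show ?thesis by (simp add: algebra_simps)
qed

context traj begin

lemma case_a_bt:
  assumes d: "\<delta> < 0"
  shows "filterlim bt at_top (right_end T)"
proof -
  define \<rho> where "\<rho> = - \<delta>"
  have \<rho>: "\<rho> > 0" using d by (simp add: \<rho>_def)
  have npos: "n > 0" using n_ge by simp
  have n\<rho>: "n * \<rho> = 1 - k * n" using npos by (simp add: \<rho>_def \<delta>_def field_simps)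
  have btb: "bt t > 1 / n" if t: "ereal t < T" for t
  proof -
    have "y t < - (x t / n)" using w_neg[OF d t] by (simp add: w_def)
    then have "x t / n < - y t" by simp
    then show ?thesis using xpos[OF t] npos by (simp add: bt_def divide_simps mult.commute)
  qed
  have bd_low: "bd t \<ge> bt t * (n * \<rho> * x t * bt t - n)" if t: "ereal t < T" for t
  proof -
    have nb: "n * bt t \<ge> 1" using btb[OF t] npos by (simp add: divide_simps mult.commute)
    have "bt t - k - n * \<rho> * bt t = k * (n * bt t - 1)" by (rule aux_id[OF n\<rho>])
    also have "\<dots> \<ge> 0" by (rule mult_nonneg_nonneg[OF less_imp_le[OF k_pos]]) (use nb in simp)
    finally have "bt t - k \<ge> n * \<rho> * bt t" by simp
    moreover have "x t * bt t > 0" using xpos[OF t] bt_pos[OF t] by simp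
    ultimately have "x t * bt t * (bt t - k) \<ge> x t * bt t * (n * \<rho> * bt t)" by (intro mult_left_mono) auto
    then show ?thesis unfolding bd_def by (simp add: algebra_simps)
  qed
  show ?thesis
  proof (cases "filterlim x at_top (right_end T)")
    case xinf: True
    show ?thesis
    proof (cases T)
      case MInf then show ?thesis using T_gt by simp
    next
      case PInf
      define X2 where "X2 = (n + 1) / \<rho>"
      have "eventually (\<lambda>t. X2 \<le> x t) (right_end T)" using xinf by (simp add: filterlim_at_top)
      then have "eventually (\<lambda>t. X2 \<le> x t \<and> ereal t < T) (right_end T)" using ev_inD
        by (rule eventually_conj)
      then obtain t1 where t1: "X2 \<le> x t1" "ereal t1 < T" using eventually_happens'[OF F_nontriv] by blast
      have bdg: "bd r \<ge> 1 / n" if r: "t1 \<le> r" for r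
      proof -
        have rT: "ereal r < T" using PInf by simp
        have X: "X2 \<le> x r" using xmono[OF r rT] t1 by simp
        have "\<rho> * x r \<ge> n + 1" using X \<rho> by (simp add: X2_def divide_le_eq mult.commute)
        moreover have "n * \<rho> * x r * bt r \<ge> \<rho> * x r"
        proof -
          have "n * bt r \<ge> 1" using btb[OF rT] npos by (simp add: divide_simps mult.commute)
          then have "(\<rho> * x r) * (n * bt r) \<ge> (\<rho> * x r) * 1"
            using \<rho> xpos[OF rT] by (intro mult_left_mono) auto
          then show ?thesis by (simp add: algebra_simps)
        qed
        ultimately have "n * \<rho> * x r * bt r - n \<ge> 1" by simp
        then have "bt r * (n * \<rho> * x r * bt r - n) \<ge> bt r * 1"
          using bt_pos[OF rT] by (intro mult_left_mono) auto
        then show ?thesis using bd_low[OF rT] btb[OF rT] by simp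
      qed
      have lin: "bt t1 + (t - t1) / n \<le> bt t" if "t1 \<le> t" for t
      proof -
        have "(\<lambda>s. bt s - s / n) t1 \<le> (\<lambda>s. bt s - s / n) t"
        proof (rule nondecr_interior[where f="\<lambda>s. bt s - s / n" and f'="\<lambda>s. bd s - 1 / n" and a=t1 and b=t])
          show "continuous_on {t1..t} (\<lambda>s. bt s - s / n)"
            using PInf hN by (intro continuous_intros continuous_at_imp_continuous_on ballI contbt) auto
          fix r assume r: "t1 < r" "r < t"
          have rT: "ereal r < T" using PInf by simp
          show "((\<lambda>s. bt s - s / n) has_real_derivative bd r - 1 / n) (at r)"
            using DERIV_diff[OF dbt[OF rT] DERIV_cdivide[OF DERIV_ident, of n]] by simp
          show "bd r - 1 / n \<ge> 0" using bdg[of r] r by simp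
        qed (use that in simp)
        then show ?thesis by (simp add: algebra_simps diff_divide_distrib)
      qed
      have "eventually (\<lambda>t. Z \<le> bt t) at_top" for Z
      proof -
        have "eventually (\<lambda>t. t1 + n * (\<bar>Z\<bar> + \<bar>bt t1\<bar>) \<le> t) at_top" by (rule eventually_ge_at_top)
        then show ?thesis
        proof (rule eventually_mono)
          fix t assume t: "t1 + n * (\<bar>Z\<bar> + \<bar>bt t1\<bar>) \<le> t"
          have nn: "n * (\<bar>Z\<bar> + \<bar>bt t1\<bar>) \<ge> 0" using npos by simp
          then have tt: "t1 \<le> t" using t by linarith
          have "n * (\<bar>Z\<bar> + \<bar>bt t1\<bar>) \<le> t - t1" using t by simp
          then have "\<bar>Z\<bar> + \<bar>bt t1\<bar> \<le> (t - t1) / n" using npos by (simp add: le_divide_eq mult.commute)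
          then show "Z \<le> bt t" using lin[OF tt] by linarith
        qed
      qed
      then show ?thesis using PInf by (simp add: right_end_def filterlim_at_top)
    next
      case (real T0)
      obtain t1 where t1: "ereal t1 < T" using T_not_bot by blast
      define C where "C = n + 2 * n * \<rho> / a"
      have C0: "C \<ge> 0" using npos \<rho> a_pos by (simp add: C_def)
      define \<Psi> where "\<Psi> t = ln (bt t) - (n * \<rho> / a) * ln (x t) + C * t" for t
      define \<Psi>' where "\<Psi>' t = inverse (bt t) * bd t - (n * \<rho> / a) * (2 - a * y t) + C" for t
      have d\<Psi>: "(\<Psi> has_real_derivative \<Psi>' t) (at t)" if tT: "ereal t < T" for t
      proof -
        have l1: "((\<lambda>t. ln (bt t)) has_real_derivative inverse (bt t) * bd t) (at t)"
          by (rule DERIV_chain2[OF DERIV_ln dbt[OF tT]]) (rule bt_pos[OF tT])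
        show ?thesis unfolding \<Psi>_def[abs_def] \<Psi>'_def
          by (intro DERIV_add DERIV_diff l1 DERIV_cmult dlnx tT) (auto intro!: derivative_eq_intros)
      qed
      have \<Psi>'pos: "\<Psi>' t \<ge> 0" if tT: "ereal t < T" for t
      proof -
        have b0: "bt t > 0" using bt_pos[OF tT] .
        have "inverse (bt t) * bd t \<ge> inverse (bt t) * (bt t * (n * \<rho> * x t * bt t - n))"
          using bd_low[OF tT] b0 by (intro mult_left_mono) auto
        also have "inverse (bt t) * (bt t * (n * \<rho> * x t * bt t - n)) = n * \<rho> * x t * bt t - n"
          using b0 by simp
        finally have A: "inverse (bt t) * bd t \<ge> n * \<rho> * x t * bt t - n" .
        have "- a * y t = a * bt t * x t" using bt_y[OF tT] by (simp add: algebra_simps)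
        then have "(n * \<rho> / a) * (2 - a * y t) = (n * \<rho> / a) * 2 + (n * \<rho> / a) * (a * bt t * x t)"
          by (metis add_uminus_conv_diff distrib_left mult_minus_left)
        also have "\<dots> = 2 * n * \<rho> / a + n * \<rho> * x t * bt t" using a_pos by simp
        finally have "(n * \<rho> / a) * (2 - a * y t) = 2 * n * \<rho> / a + n * \<rho> * x t * bt t" .
        then show ?thesis using A by (simp add: \<Psi>'_def C_def)
      qed
      have \<Psi>mono: "\<Psi> t1 \<le> \<Psi> t" if t: "t1 \<le> t" "ereal t < T" for t
      proof (rule nondecr_interior[where f=\<Psi> and f'=\<Psi>' and a=t1 and b=t])
        show "continuous_on {t1..t} \<Psi>"
          by (intro continuous_at_imp_continuous_on ballI DERIV_isCont[OF d\<Psi>])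
             (use t in \<open>auto intro: ereal_lt_mono\<close>)
        fix r assume r: "t1 < r" "r < t"
        have rT: "ereal r < T" using ereal_lt_mono[of r t T] r t by simp
        show "(\<Psi> has_real_derivative \<Psi>' r) (at r)" by (rule d\<Psi>[OF rT])
        show "\<Psi>' r \<ge> 0" by (rule \<Psi>'pos[OF rT])
      qed (use t in simp)
      have "eventually (\<lambda>t. Z \<le> bt t) (at_left T0)" for Z
      proof -
        define R where "R = ln (\<bar>Z\<bar> + 1) - \<Psi> t1 + C * T0"
        define L where "L = exp (R * a / (n * \<rho>))"
        have "eventually (\<lambda>t. L \<le> x t) (right_end T)" using xinf by (simp add: filterlim_at_top)
        then have "eventually (\<lambda>t. L \<le> x t \<and> (t1 < t \<and> ereal t < T)) (right_end T)"
          using ev_after[OF t1] by (rule eventually_conj)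
        then have ev: "eventually (\<lambda>t. L \<le> x t \<and> (t1 < t \<and> ereal t < T)) (at_left T0)"
          using real by (simp add: right_end_def)
        show ?thesis using ev
        proof (rule eventually_mono)
          fix t assume t: "L \<le> x t \<and> (t1 < t \<and> ereal t < T)"
          have tT: "ereal t < T" and t1t: "t1 \<le> t" using t by auto
          have tT0: "t < T0" using tT real by simp
          have "ln L \<le> ln (x t)" using t xpos[OF tT] by (subst ln_le_cancel_iff) (auto simp: L_def)
          then have lnx: "R * a / (n * \<rho>) \<le> ln (x t)" by (simp add: L_def)
          have pos: "n * \<rho> / a > 0" using npos \<rho> a_pos by simp
          have "R \<le> (n * \<rho> / a) * ln (x t)"
          proof -
            have "(n * \<rho> / a) * (R * a / (n * \<rho>)) \<le> (n * \<rho> / a) * ln (x t)"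
              using lnx pos by (intro mult_left_mono) auto
            moreover have "(n * \<rho> / a) * (R * a / (n * \<rho>)) = R" using npos \<rho> a_pos by simp
            ultimately show ?thesis by simp
          qed
          moreover have "C * t \<le> C * T0" using C0 tT0 by (intro mult_left_mono) auto
          moreover have "\<Psi> t1 \<le> \<Psi> t" by (rule \<Psi>mono[OF t1t tT])
          ultimately have "ln (\<bar>Z\<bar> + 1) \<le> ln (bt t)" by (simp add: \<Psi>_def R_def)
          then have "\<bar>Z\<bar> + 1 \<le> bt t" using bt_pos[OF tT] by simp
          then show "Z \<le> bt t" by simp
        qed
      qed
      then show ?thesis using real by (simp add: right_end_def filterlim_at_top)
    qed
  next
    case False
    then obtain T0 B where real: "T = ereal T0" and xB: "\<And>t. t < T0 \<Longrightarrow> x t \<le> B"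
      using xlim_cases by blast
    obtain t1 where t1: "ereal t1 < T" using T_not_bot by blast
    have "t1 < T0" using t1 real by simp
    then have B0: "B > 0" using xB[of t1] xpos[OF t1] by simp
    have unb: "\<exists>t. t < T0 \<and> y t < - Bd" for Bd
    proof (rule ccontr)
      assume neg: "\<not> ?thesis"
      have yb: "y t \<ge> - Bd" if "t < T0" for t
      proof (rule ccontr)
        assume "\<not> y t \<ge> - Bd"
        then have "y t < - Bd" by simp
        then show False using neg that by blast
      qed
      show False
      proof (rule ext_contra[OF sol_real[OF real], where B="max B Bd"])
        fix t assume t: "t < T0"
        then have tT: "ereal t < T" using real by simp
        show "z t = 0" using zz[OF tT] .
        show "\<bar>x t\<bar> \<le> max B Bd" using xB[OF t] xpos[OF tT] by simp
        show "\<bar>y t\<bar> \<le> max B Bd" using yb[OF t] yneg[OF tT] by simp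
      qed
    qed
    define Y1 where "Y1 = (c + k * B) / m + 1"
    have hmpos: "m > 0" using hm by simp
    have qlarge: "eventually (\<lambda>t. Bd < - y t) (at_left T0)" if Bd: "Y1 \<le> Bd" for Bd
    proof -
      obtain t2 where t2: "t2 < T0" "y t2 < - Bd" using unb by blast
      have t2T: "ereal t2 < T" using t2 real by simp
      define f' where "f' t = - (- x t - c * y t - m * (y t)\<^sup>2 - k * x t * y t) - 0" for t
      have D: "((\<lambda>t. - y t - Bd) has_real_derivative f' s) (at s)" if "ereal s < T" for s
        unfolding f'_def by (intro DERIV_diff DERIV_minus dy that DERIV_const)
      have pos2: "- y t2 - Bd > 0" using t2 by simp
      have zero: "f' s > 0" if s: "t2 \<le> s" "ereal s < T" "- y s - Bd = 0" for s
      proof -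
        have ys: "y s = - Bd" using s(3) by simp
        have sT0: "s < T0" using s(2) real by simp
        have Bdpos: "Bd > 0"
        proof -
          have "k * B \<ge> 0" using mult_nonneg_nonneg[OF less_imp_le[OF k_pos] less_imp_le[OF B0]] .
          then have "c + k * B \<ge> 0" using c_ge by linarith
          then have "(c + k * B) / m \<ge> 0" using hmpos by (rule divide_nonneg_pos)
          then show ?thesis using Bd by (simp add: Y1_def)
        qed
        have "m * Bd - c - k * B \<ge> m"
        proof -
          have "m * Y1 = c + k * B + m" using hmpos by (simp add: Y1_def field_simps)
          moreover have "m * Y1 \<le> m * Bd" using Bd hmpos by simp
          ultimately show ?thesis by simp
        qed
        then have "Bd * (m * Bd - c - k * B) \<ge> Bd * m" using Bdpos by (intro mult_left_mono) auto
        moreover have "k * x s * Bd \<le> k * B * Bd"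
          using xB[OF sT0] k_pos Bdpos by (intro mult_right_mono mult_left_mono) auto
        moreover have "x s > 0" using xpos[OF s(2)] .
        moreover have "f' s = x s - c * Bd + m * Bd\<^sup>2 - k * x s * Bd"
          unfolding f'_def ys by (simp add: power2_eq_square)
        ultimately have "f' s \<ge> Bd * m" by (simp add: algebra_simps power2_eq_square)
        moreover have "Bd * m > 0" using Bdpos hmpos by (rule mult_pos_pos)
        ultimately show ?thesis by linarith
      qed
      have "- y s - Bd > 0" if "t2 \<le> s" "ereal s < T" for s
        using barrier_fwd[of T "\<lambda>t. - y t - Bd" f' t2 s, OF D t2T pos2 zero that] by simp
      then have "eventually (\<lambda>t. t2 < t \<and> ereal t < T \<longrightarrow> Bd < - y t) (at_left T0)"
        by simp
      moreover have "eventually (\<lambda>t. t2 < t \<and> ereal t < T) (at_left T0)"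
        using ev_after[OF t2T] real by (simp add: right_end_def)
      ultimately show ?thesis by (auto elim: eventually_elim2)
    qed
    have "eventually (\<lambda>t. Z \<le> bt t) (at_left T0)" for Z
    proof -
      define Bd where "Bd = max Y1 (\<bar>Z\<bar> * B)"
      have e1: "eventually (\<lambda>t. Bd < - y t) (at_left T0)" by (rule qlarge) (simp add: Bd_def)
      have e2: "eventually (\<lambda>t. t1 < t \<and> ereal t < T) (at_left T0)"
        using ev_after[OF t1] real by (simp add: right_end_def)
      have "eventually (\<lambda>t. Bd < - y t \<and> (t1 < t \<and> ereal t < T)) (at_left T0)"
        using eventually_conj[OF e1 e2] .
      then show ?thesis
      proof (rule eventually_mono)
        fix t assume t: "Bd < - y t \<and> (t1 < t \<and> ereal t < T)"
        then have tT: "ereal t < T" by simp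
        have xt: "0 < x t" "x t \<le> B" using xpos[OF tT] xB[of t] tT real by auto
        have "\<bar>Z\<bar> * B < - y t" using t by (simp add: Bd_def)
        then have "\<bar>Z\<bar> * x t \<le> - y t" using xt mult_left_mono[OF xt(2), of "\<bar>Z\<bar>"] by simp
        then have "\<bar>Z\<bar> \<le> (- y t) / x t" by (subst pos_le_divide_eq[OF xt(1)])
        then have "\<bar>Z\<bar> \<le> bt t" by (simp add: bt_def)
        then show "Z \<le> bt t" by simp
      qed
    qed
    then show ?thesis using real by (simp add: right_end_def filterlim_at_top)
  qed
qed

end



context traj begin

lemma case_a:
  assumes hp1: "p < m + (\<sigma> + 2) / n"
  shows "filterlim (\<lambda>t. y t / x t) at_bot (right_end T) \<and>
        ((\<lambda>t. (1 / x t) / (y t / x t)) \<longlongrightarrow> 0) (right_end T) \<and>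
        (\<forall>t. ereal t < T \<longrightarrow> z t / x t = 0)"
proof -
  have d: "\<delta> < 0" using delta_neg_iff hp1 by simp
  have btinf: "filterlim bt at_top (right_end T)" by (rule case_a_bt[OF d])
  have e: "(\<lambda>t. y t / x t) = (\<lambda>t. - bt t)" by (simp add: bt_def fun_eq_iff)
  have A: "filterlim (\<lambda>t. y t / x t) at_bot (right_end T)"
    unfolding e using btinf filterlim_uminus_at_top by blast
  obtain t1 where t1: "ereal t1 < T" using T_not_bot by blast
  have x1: "x t1 > 0" using xpos[OF t1] .
  have qinf: "filterlim (\<lambda>t. - y t) at_top (right_end T)"
    unfolding filterlim_at_top
  proof
    fix Z
    have "eventually (\<lambda>t. \<bar>Z\<bar> / x t1 \<le> bt t) (right_end T)" using btinf by (simp add: filterlim_at_top)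
    then have "eventually (\<lambda>t. \<bar>Z\<bar> / x t1 \<le> bt t \<and> (t1 < t \<and> ereal t < T)) (right_end T)"
      using ev_after[OF t1] by (rule eventually_conj)
    then show "eventually (\<lambda>t. Z \<le> - y t) (right_end T)"
    proof (rule eventually_mono)
      fix t assume t: "\<bar>Z\<bar> / x t1 \<le> bt t \<and> (t1 < t \<and> ereal t < T)"
      then have tT: "ereal t < T" by simp
      have xx: "x t1 \<le> x t" using xmono[of t1 t] t by simp
      have "\<bar>Z\<bar> \<le> bt t * x t1" using t x1 by (simp add: divide_le_eq)
      also have "\<dots> \<le> bt t * x t" using xx bt_pos[OF tT] by (intro mult_left_mono) auto
      also have "\<dots> = - y t" using bt_y[OF tT] by simp
      finally show "Z \<le> - y t" by simp
    qed
  qed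
  have "((\<lambda>t. - inverse (- y t)) \<longlongrightarrow> - 0) (right_end T)"
    by (intro tendsto_minus tendsto_inverse_0_at_top qinf)
  moreover have "eventually (\<lambda>t. - inverse (- y t) = (1 / x t) / (y t / x t)) (right_end T)"
    using ev_inD
  proof (rule eventually_mono)
    fix t assume tT: "ereal t < T"
    show "- inverse (- y t) = (1 / x t) / (y t / x t)" using xpos[OF tT] yneg[OF tT]
      by (simp add: field_simps)
  qed
  ultimately have B: "((\<lambda>t. (1 / x t) / (y t / x t)) \<longlongrightarrow> 0) (right_end T)"
    by (simp add: tendsto_cong)
  show ?thesis using A B zz by simp
qed

end

theorem lemma3p3:
  fixes m \<sigma> p :: real and N :: nat and x y z :: "real \<Rightarrow> real" and T :: ereal
  assumes hm: "m > 1" and h\<sigma>: "\<sigma> > 0" and hp: "p > m" and hN: "N \<ge> 3"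
    and sol: "S2_maximal_solution m N \<sigma> p x y z T"
    and pos: "\<forall>t. ereal t < T \<longrightarrow> x t > 0 \<and> z t = 0"
    and from_Q1: "((\<lambda>t. (x t, y t, z t)) \<longlongrightarrow> (0, 0, 0)) at_bot"
  shows
   "(m < p \<and> p < m + (\<sigma> + 2) / real N \<longrightarrow>
        filterlim (\<lambda>t. y t / x t) at_bot (right_end T) \<and>
        ((\<lambda>t. (1 / x t) / (y t / x t)) \<longlongrightarrow> 0) (right_end T) \<and>
        (\<forall>t. ereal t < T \<longrightarrow> z t / x t = 0))
    \<and> (p = m + (\<sigma> + 2) / real N \<longrightarrow>
        {(x t, y t, z t) | t. ereal t < T} = {(s, - s / real N, 0) | s. s > 0} \<and>
        ((\<lambda>t. (1 / x t, y t / x t, z t / x t)) \<longlongrightarrow> (0, - (p - m) / (\<sigma> + 2), 0))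
          (right_end T))
    \<and> (p > m + (\<sigma> + 2) / real N \<longrightarrow>
        ((\<lambda>t. (1 / x t, y t / x t, z t / x t)) \<longlongrightarrow> (0, 0, 0)) (right_end T))"
proof -
  interpret traj m \<sigma> p N x y z T
    by unfold_locales (use assms in auto)
  show ?thesis using case_a case_b case_c by blast
qed


end
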